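(* Suppose $N \ge 3$ and let $\mathcal A$ be a real principally polarized abelian variety with level $N$ structure. Then there exist $Z \in \mathfrak h_n$ and $\gamma \in \Gamma(N)$ with $\gamma \cdot Z = \tau(Z)$, and there exists an isomorphism $\phi: \mathcal A_Z \to \mathcal A$ of real principally polarized abelian varieties with level $N$ structures, where $\mathcal A_Z = \left(A_Z, H_Z, \kappa(\gamma,Z), \{F_Z(e_i/N), F_Z(f_j/N)\}\right)$. If $N = 4m$ with $m \ge 1$, then the cohomology class $[f_{\gamma}] \in H^1(\mathbb C/\mathbb R, \Gamma(4m))$ is uniquely determined by the isomorphism class of $\mathcal A$: that is, if $\mathcal A \cong \mathcal A'$ and $(Z,\gamma)$, $(Z',\gamma')$ are pairs as in the first statement for $\mathcal A$ and $\mathcal A'$ respectively, then $[f_{\gamma}] = [f_{\gamma'}]$.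
   Context: $\mathfrak h_n$ is the Siegel upper half space of symmetric complex $n\times n$ matrices with positive definite imaginary part, on which $\mathbf{Sp}(2n,\mathbb R)$ acts by $\left(\begin{smallmatrix} A&B\\C&D\end{smallmatrix}\right)\cdot Z = (AZ+B)(CZ+D)^{-1}$. The involution $\tau$ on $\mathbf{Sp}(2n,\mathbb R)$ is $\tau\left(\begin{smallmatrix} A&B\\C&D\end{smallmatrix}\right) = \left(\begin{smallmatrix} A&-B\\-C&D\end{smallmatrix}\right)$ (written $\tilde g$), and on $\mathfrak h_n$ it is $\tau(Z) = -\overline{Z}$. $\Gamma(N)$ is the principal congruence subgroup of level $N$ in $\mathbf{Sp}(2n,\mathbb Z)$. For $\gamma$ with $\gamma\tilde\gamma = I$, $f_\gamma$ is the 1-cocycle $\mathrm{Gal}(\mathbb C/\mathbb R)\to\Gamma(4m)$ with $f_\gamma(1)=I$, $f_\gamma(\tau)=\gamma$; cocycles $f_\gamma, f_{\gamma'}$ are cohomologous iff $\gamma' = \tilde g^{-1}\gamma g$ for some $g \in \Gamma(4m)$. A real principally polarized abelian variety with level $N$ structure is a quadruple $(A=\mathbb C^n/L, H=R+iQ, \kappa, \{U_i,V_j\})$: $H$ a positive definite Hermitian form, $L$ a lattice symplectic for $Q=\mathrm{Im}\,H$, $\kappa$ an anti-linear involution of $\mathbb C^n$ with $\kappa(L)=L$ and $Q(\kappa u,\kappa v) = -Q(u,v)$, and $\{U_i,V_j\}$ a basis of $N$-torsion points with $U_i \equiv u_i/N$, $V_j \equiv v_j/N \bmod L$ for some symplectic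 basis $\{u_i,v_j\}$ of $L$, compatible with $\kappa$ in the sense $\kappa(u_i/N)\equiv -u_i/N$, $\kappa(v_j/N)\equiv v_j/N \bmod L$. An isomorphism is a complex linear map $\phi$ carrying lattice to lattice, $H$ to $H'$, with $\phi\kappa\phi^{-1}=\kappa'$, and $\phi(u_i/N)\equiv u'_i/N$, $\phi(v_j/N)\equiv v'_j/N \bmod L'$. For $Z \in \mathfrak h_n$: $F_Z:\mathbb R^n\oplus\mathbb R^n\to\mathbb C^n$, $F_Z(x,y) = Zx+y$; $L_Z = F_Z(\mathbb Z^n\oplus\mathbb Z^n)$; $A_Z = \mathbb C^n/L_Z$; $H_Z(u,v) = {}^t u(\mathrm{Im} Z)^{-1}\bar v$; $e_i,f_j$ is the standard basis of $\mathbb R^n\oplus\mathbb R^n$. If $\gamma = \left(\begin{smallmatrix} A&B\\C&D\end{smallmatrix}\right)\in\mathbf{Sp}(2n,\mathbb Z)$ satisfies $\gamma\cdot Z = \tau(Z)$, then $\kappa(\gamma,Z)(M) = {}^t(CZ+D)\overline{M}$ is a real structure on $(A_Z,H_Z)$ compatible with the polarization, and it is compatible with the standard level $N$ structure $\{F_Z(e_i/N),F_Z(f_j/N)\}$ iff $\gamma\in\Gamma(N)$. *)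

theory Defs
  imports "HOL-Analysis.Analysis"
begin

text \<open>Elements of Sp(2n) are represented by their n x n blocks (A,B,C,D);
  integral elements (Sp(2n,Z)) have entries in int. The dimension n is the
  cardinality of the finite index type 'n.\<close>

type_synonym ('n) blk = "(int^'n^'n) \<times> (int^'n^'n) \<times> (int^'n^'n) \<times> (int^'n^'n)"

definition cmat :: "int^'n^'n \<Rightarrow> complex^'n^'n" where
  "cmat M = (\<chi> i j. of_int (M$i$j))"

definition ImM :: "complex^'n^'n \<Rightarrow> real^'n^'n" where
  "ImM Z = (\<chi> i j. Im (Z$i$j))"

definition cnjv :: "complex^'n \<Rightarrow> complex^'n" where
  "cnjv v = (\<chi> i. cnj (v$i))"

definition cnjM :: "complex^'n^'n \<Rightarrow> complex^'n^'n" where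
  "cnjM Z = (\<chi> i j. cnj (Z$i$j))"

definition posdef_real :: "real^'n^'n \<Rightarrow> bool" where
  "posdef_real Y \<longleftrightarrow> (\<forall>x. x \<noteq> 0 \<longrightarrow> x \<bullet> (Y *v x) > 0)"

definition siegel :: "(complex^'n^'n) set" where
  "siegel = {Z. transpose Z = Z \<and> posdef_real (ImM Z)}"

text \<open>Symplectic: the block form of  (transpose g) J g = J.\<close>
definition symplectic_int :: "('n::finite) blk \<Rightarrow> bool" where
  "symplectic_int g = (case g of (A,B,C,D) \<Rightarrow>
      transpose A ** C = transpose C ** A \<and>
      transpose B ** D = transpose D ** B \<and>
      transpose A ** D - transpose C ** B = mat 1)"

definition Gamma :: "int \<Rightarrow> ('n::finite) blk set" where
  "Gamma N = {g. symplectic_int g \<and> (case g of (A,B,C,D) \<Rightarrow>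
      (\<forall>i j. N dvd (A$i$j - (mat 1 :: int^'n^'n)$i$j) \<and> N dvd B$i$j \<and>
             N dvd C$i$j \<and> N dvd (D$i$j - (mat 1 :: int^'n^'n)$i$j)))}"

definition sp_act :: "('n::finite) blk \<Rightarrow> complex^'n^'n \<Rightarrow> complex^'n^'n" where
  "sp_act g Z = (case g of (A,B,C,D) \<Rightarrow>
      (cmat A ** Z + cmat B) ** matrix_inv (cmat C ** Z + cmat D))"

definition tauZ :: "complex^'n^'n \<Rightarrow> complex^'n^'n" where
  "tauZ Z = - cnjM Z"

definition tilde :: "('n::finite) blk \<Rightarrow> 'n blk" where
  "tilde g = (case g of (A,B,C,D) \<Rightarrow> (A, -B, -C, D))"

definition sp_mult :: "('n::finite) blk \<Rightarrow> 'n blk \<Rightarrow> 'n blk" where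
  "sp_mult g h = (case g of (A,B,C,D) \<Rightarrow> case h of (A',B',C',D') \<Rightarrow>
      (A ** A' + B ** C', A ** B' + B ** D', C ** A' + D ** C', C ** B' + D ** D'))"

text \<open>Cohomologous cocycles f_gamma, f_gamma' in H^1(C/R, Gamma(N)):
  gamma' = tilde(g)^{-1} gamma g for some g in Gamma(N), written
  multiplicatively as tilde(g) gamma' = gamma g.\<close>
definition cohomologous :: "int \<Rightarrow> ('n::finite) blk \<Rightarrow> 'n blk \<Rightarrow> bool" where
  "cohomologous N \<gamma> \<gamma>' \<longleftrightarrow> (\<exists>g \<in> Gamma N. sp_mult (tilde g) \<gamma>' = sp_mult \<gamma> g)"

record 'n rppav =
  lat  :: "(complex^'n) set"
  herm :: "complex^'n \<Rightarrow> complex^'n \<Rightarrow> complex"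
  kap  :: "complex^'n \<Rightarrow> complex^'n"
  lvlU :: "'n \<Rightarrow> complex^'n"
  lvlV :: "'n \<Rightarrow> complex^'n"

definition pos_def_hermitian :: "(complex^'n \<Rightarrow> complex^'n \<Rightarrow> complex) \<Rightarrow> bool" where
  "pos_def_hermitian H \<longleftrightarrow>
     (\<forall>u u' v. H (u + u') v = H u v + H u' v) \<and>
     (\<forall>c u v. H (c *s u) v = c * H u v) \<and>
     (\<forall>u v. H v u = cnj (H u v)) \<and>
     (\<forall>u. u \<noteq> 0 \<longrightarrow> Re (H u u) > 0 \<and> Im (H u u) = 0)"

definition antilinear_involution :: "(complex^'n \<Rightarrow> complex^'n) \<Rightarrow> bool" where
  "antilinear_involution k \<longleftrightarrow>
     (\<forall>u v. k (u + v) = k u + k v) \<and>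
     (\<forall>c u. k (c *s u) = cnj c *s k u) \<and>
     (\<forall>u. k (k u) = u)"

definition symplectic_basis ::
  "(complex^'n) set \<Rightarrow> (complex^'n \<Rightarrow> complex^'n \<Rightarrow> real) \<Rightarrow>
   ('n \<Rightarrow> complex^'n) \<Rightarrow> ('n \<Rightarrow> complex^'n) \<Rightarrow> bool" where
  "symplectic_basis L Q u v \<longleftrightarrow>
     (\<forall>a b :: 'n \<Rightarrow> real. (\<Sum>i\<in>UNIV. a i *\<^sub>R u i + b i *\<^sub>R v i) = 0 \<longrightarrow> a = (\<lambda>_. 0) \<and> b = (\<lambda>_. 0)) \<and>
     L = {(\<Sum>i\<in>UNIV. of_int (a i) *s u i + of_int (b i) *s v i) | a b :: 'n \<Rightarrow> int. True} \<and>
     (\<forall>i j. Q (u i) (v j) = (if i = j then 1 else 0) \<and> Q (u i) (u j) = 0 \<and> Q (v i) (v j) = 0)"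

definition real_ppav_level :: "int \<Rightarrow> ('n::finite) rppav \<Rightarrow> bool" where
  "real_ppav_level N X \<longleftrightarrow>
     (let L = lat X; H = herm X; k = kap X; Q = (\<lambda>u v. Im (H u v)) in
       pos_def_hermitian H \<and>
       antilinear_involution k \<and> k ` L = L \<and> (\<forall>u v. Q (k u) (k v) = - Q u v) \<and>
       (\<exists>u v. symplectic_basis L Q u v \<and>
          (\<forall>i. lvlU X i - (1 / of_int N) *s u i \<in> L \<and> lvlV X i - (1 / of_int N) *s v i \<in> L) \<and>
          (\<forall>i. k ((1 / of_int N) *s u i) + (1 / of_int N) *s u i \<in> L \<and>
               k ((1 / of_int N) *s v i) - (1 / of_int N) *s v i \<in> L)))"

text \<open>Isomorphism phi : X \<rightarrow> X' (the level points U_i, V_j are representatives of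
  u_i/N, v_j/N modulo the lattice).\<close>
definition rppav_iso :: "('n::finite) rppav \<Rightarrow> 'n rppav \<Rightarrow> (complex^'n \<Rightarrow> complex^'n) \<Rightarrow> bool" where
  "rppav_iso X X' \<phi> \<longleftrightarrow>
     (\<forall>u v. \<phi> (u + v) = \<phi> u + \<phi> v) \<and> (\<forall>c u. \<phi> (c *s u) = c *s \<phi> u) \<and> bij \<phi> \<and>
     \<phi> ` lat X = lat X' \<and>
     (\<forall>u v. herm X' (\<phi> u) (\<phi> v) = herm X u v) \<and>
     \<phi> \<circ> kap X = kap X' \<circ> \<phi> \<and>
     (\<forall>i. \<phi> (lvlU X i) - lvlU X' i \<in> lat X' \<and> \<phi> (lvlV X i) - lvlV X' i \<in> lat X')"

definition F_Z :: "complex^'n^'n \<Rightarrow> real^'n \<Rightarrow> real^'n \<Rightarrow> complex^'n" where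
  "F_Z Z x y = Z *v (\<chi> i. complex_of_real (x$i)) + (\<chi> i. complex_of_real (y$i))"

definition L_Z :: "complex^'n^'n \<Rightarrow> (complex^'n) set" where
  "L_Z Z = {F_Z Z (\<chi> i. of_int (a i)) (\<chi> i. of_int (b i)) | a b :: 'n \<Rightarrow> int. True}"

definition H_Z :: "complex^'n^'n \<Rightarrow> complex^'n \<Rightarrow> complex^'n \<Rightarrow> complex" where
  "H_Z Z u v = (\<Sum>i\<in>UNIV. \<Sum>j\<in>UNIV.
      u$i * complex_of_real (matrix_inv (ImM Z) $i$j) * cnj (v$j))"

definition kappa_Z :: "('n::finite) blk \<Rightarrow> complex^'n^'n \<Rightarrow> complex^'n \<Rightarrow> complex^'n" where
  "kappa_Z g Z M = (case g of (A,B,C,D) \<Rightarrow> transpose (cmat C ** Z + cmat D) *v cnjv M)"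

definition AZ :: "int \<Rightarrow> ('n::finite) blk \<Rightarrow> complex^'n^'n \<Rightarrow> 'n rppav" where
  "AZ N g Z = \<lparr> lat = L_Z Z, herm = H_Z Z, kap = kappa_Z g Z,
      lvlU = (\<lambda>i. F_Z Z (axis i (1 / of_int N)) 0),
      lvlV = (\<lambda>j. F_Z Z 0 (axis j (1 / of_int N))) \<rparr>"

end

theory Submission
  imports Defs
begin


lemma mm_add_r: "((A::'a::semiring_1^'n^'m) + B) ** C = A ** C + B ** C"
  by (simp add: matrix_matrix_mult_def vec_eq_iff distrib_right sum.distrib)
lemma mm_add_l: "(A::'a::semiring_1^'n^'m) ** (B + C) = A ** B + A ** C"
  by (rule matrix_add_ldistrib)
lemma mm_neg_l: "(- (A::'a::ring_1^'n^'m)) ** B = - (A ** B)"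
  by (simp add: matrix_matrix_mult_def vec_eq_iff sum_negf)
lemma mm_neg_r: "(A::'a::ring_1^'n^'m) ** (- B) = - (A ** B)"
  by (simp add: matrix_matrix_mult_def vec_eq_iff sum_negf)
lemma mm_diff_r: "((A::'a::ring_1^'n^'m) - B) ** C = A ** C - B ** C"
  by (simp add: matrix_matrix_mult_def vec_eq_iff left_diff_distrib sum_subtractf)
lemma mm_diff_l: "(A::'a::ring_1^'n^'m) ** (B - C) = A ** B - A ** C"
  by (simp add: matrix_matrix_mult_def vec_eq_iff right_diff_distrib sum_subtractf)
lemma transpose_add: "transpose ((A::'a::semiring_1^'n^'m) + B) = transpose A + transpose B"
  by (simp add: transpose_def vec_eq_iff)
lemma transpose_neg: "transpose (- (A::'a::ring_1^'n^'m)) = - transpose A"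
  by (simp add: transpose_def vec_eq_iff)
lemma transpose_diff: "transpose ((A::'a::ring_1^'n^'m) - B) = transpose A - transpose B"
  by (simp add: transpose_def vec_eq_iff)
lemma transpose_zero[simp]: "transpose (0::'a::zero^'n^'m) = 0"
  by (simp add: transpose_def vec_eq_iff)

lemma matrix_inv_eq:
  fixes A B :: "'a::semiring_1^'n^'n"
  assumes "A ** B = mat 1" "B ** A = mat 1"
  shows "matrix_inv A = B"
proof -
  have ex: "\<exists>A'. A ** A' = mat 1 \<and> A' ** A = mat 1" using assms by blast
  define C where "C = matrix_inv A"
  have C: "A ** C = mat 1 \<and> C ** A = mat 1"
    unfolding C_def matrix_inv_def using someI_ex[OF ex] .
  have "C = C ** (A ** B)" using assms by simp
  also have "\<dots> = (C ** A) ** B" by (simp add: matrix_mul_assoc)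
  also have "\<dots> = B" using C by simp
  finally show ?thesis unfolding C_def .
qed

lemma cmat_mult: "cmat (A ** B) = cmat A ** cmat B"
  by (simp add: cmat_def matrix_matrix_mult_def vec_eq_iff)
lemma cmat_add: "cmat (A + B) = cmat A + cmat B"
  by (simp add: cmat_def vec_eq_iff)
lemma cmat_neg: "cmat (- A) = - cmat A"
  by (simp add: cmat_def vec_eq_iff)
lemma cmat_diff: "cmat (A - B) = cmat A - cmat B"
  by (simp add: cmat_def vec_eq_iff)
lemma cmat_transpose: "cmat (transpose A) = transpose (cmat A)"
  by (simp add: cmat_def transpose_def vec_eq_iff)
lemma cmat_one: "cmat (mat 1) = mat 1"
  by (simp add: cmat_def mat_def vec_eq_iff)
lemma cmat_zero: "cmat 0 = 0"
  by (simp add: cmat_def vec_eq_iff)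
lemma cmat_inj: "cmat A = cmat B \<Longrightarrow> A = B"
  by (simp add: cmat_def vec_eq_iff)

lemma cnjM_mult: "cnjM (A ** B) = cnjM A ** cnjM B"
  by (simp add: cnjM_def matrix_matrix_mult_def vec_eq_iff)
lemma cnjM_add: "cnjM (A + B) = cnjM A + cnjM B"
  by (simp add: cnjM_def vec_eq_iff)
lemma cnjM_neg: "cnjM (- A) = - cnjM A"
  by (simp add: cnjM_def vec_eq_iff)
lemma cnjM_cnjM[simp]: "cnjM (cnjM A) = A"
  by (simp add: cnjM_def vec_eq_iff)
lemma cnjM_cmat[simp]: "cnjM (cmat A) = cmat A"
  by (simp add: cnjM_def cmat_def vec_eq_iff)
lemma cnjM_one[simp]: "cnjM (mat 1) = mat 1"
  by (simp add: cnjM_def mat_def vec_eq_iff)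
lemma cnjM_transpose: "cnjM (transpose A) = transpose (cnjM A)"
  by (simp add: cnjM_def transpose_def vec_eq_iff)
lemma cnjv_mult: "cnjv (A *v x) = cnjM A *v cnjv x"
  by (simp add: cnjv_def cnjM_def matrix_vector_mult_def vec_eq_iff)
lemma cnjv_cnjv[simp]: "cnjv (cnjv x) = x"
  by (simp add: cnjv_def vec_eq_iff)
lemma cnjv_add: "cnjv (x + y) = cnjv x + cnjv y"
  by (simp add: cnjv_def vec_eq_iff)
lemma cnjv_smult: "cnjv (c *s x) = cnj c *s cnjv x"
  by (simp add: cnjv_def vec_eq_iff)

section \<open>Block matrices over int\<close>

definition bI :: "('n::finite) blk" where "bI = (mat 1, 0, 0, mat 1)"
definition bJ :: "('n::finite) blk" where "bJ = (0, mat 1, - mat 1, 0)"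
definition bE :: "('n::finite) blk" where "bE = (- mat 1, 0, 0, mat 1)"
definition btr :: "('n::finite) blk \<Rightarrow> 'n blk" where
  "btr g = (case g of (A,B,C,D) \<Rightarrow> (transpose A, transpose C, transpose B, transpose D))"
definition bneg :: "('n::finite) blk \<Rightarrow> 'n blk" where
  "bneg g = (case g of (A,B,C,D) \<Rightarrow> (-A,-B,-C,-D))"

lemmas mm_simps = mm_add_r mm_add_l mm_neg_l mm_neg_r matrix_mul_assoc

lemma sp_mult_assoc: "sp_mult (sp_mult a b) c = sp_mult a (sp_mult b c)"
  by (cases a; cases b; cases c) (simp add: sp_mult_def mm_simps add_ac)
lemma sp_mult_I_left[simp]: "sp_mult bI a = a"
  by (cases a) (simp add: sp_mult_def bI_def)
lemma sp_mult_I_right[simp]: "sp_mult a bI = a"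
  by (cases a) (simp add: sp_mult_def bI_def)
lemma btr_mult: "btr (sp_mult a b) = sp_mult (btr b) (btr a)"
  by (cases a; cases b) (simp add: sp_mult_def btr_def matrix_transpose_mul transpose_add add_ac)
lemma btr_btr[simp]: "btr (btr a) = a"
  by (cases a) (simp add: btr_def)
lemma bneg_left: "sp_mult (bneg a) b = bneg (sp_mult a b)"
  by (cases a; cases b) (simp add: sp_mult_def bneg_def mm_simps)
lemma bneg_right: "sp_mult a (bneg b) = bneg (sp_mult a b)"
  by (cases a; cases b) (simp add: sp_mult_def bneg_def mm_simps)
lemma bneg_bneg[simp]: "bneg (bneg a) = a"
  by (cases a) (simp add: bneg_def)
lemma bJJ: "sp_mult bJ bJ = bneg bI"
  by (simp add: sp_mult_def bJ_def bI_def bneg_def mm_simps)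
lemma bEE: "sp_mult bE bE = bI"
  by (simp add: sp_mult_def bE_def bI_def mm_simps)
lemma btr_bJ: "btr bJ = bneg bJ"
  by (simp add: btr_def bJ_def bneg_def transpose_neg)
lemma btr_bE: "btr bE = bE"
  by (simp add: btr_def bE_def transpose_neg)
lemma btr_bI: "btr bI = bI"
  by (simp add: btr_def bI_def)
lemma btr_bneg: "btr (bneg a) = bneg (btr a)"
  by (cases a) (simp add: btr_def bneg_def transpose_neg)
lemma tilde_bE: "tilde g = sp_mult bE (sp_mult g bE)"
  by (cases g) (simp add: tilde_def sp_mult_def bE_def mm_simps)

lemma symplectic_int_iff: "symplectic_int g \<longleftrightarrow> sp_mult (btr g) (sp_mult bJ g) = bJ"
proof (cases g)
  case (fields A B C D)
  have "sp_mult (btr g) (sp_mult bJ g) =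
    (transpose A ** C - transpose C ** A, transpose A ** D - transpose C ** B,
     transpose B ** C - transpose D ** A, transpose B ** D - transpose D ** B)"
    by (simp add: fields sp_mult_def btr_def bJ_def mm_simps)
  moreover have "transpose B ** C - transpose D ** A = - transpose (transpose A ** D - transpose C ** B)"
    by (simp add: transpose_diff matrix_transpose_mul)
  ultimately show ?thesis
    by (auto simp: fields symplectic_int_def bJ_def transpose_neg)
qed


section \<open>Action of integer block matrices on pairs of real vectors\<close>

definition rmat :: "int^'n^'n \<Rightarrow> real^'n^'n" where
  "rmat M = (\<chi> i j. real_of_int (M$i$j))"

lemma rmat_mult: "rmat (A ** B) = rmat A ** rmat B"
  by (simp add: rmat_def matrix_matrix_mult_def vec_eq_iff)
lemma rmat_add: "rmat (A + B) = rmat A + rmat B"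
  by (simp add: rmat_def vec_eq_iff)
lemma rmat_neg: "rmat (- A) = - rmat A"
  by (simp add: rmat_def vec_eq_iff)
lemma rmat_transpose: "rmat (transpose A) = transpose (rmat A)"
  by (simp add: rmat_def transpose_def vec_eq_iff)
lemma rmat_one: "rmat (mat 1) = mat 1"
  by (simp add: rmat_def mat_def vec_eq_iff)
lemma rmat_zero: "rmat 0 = 0"
  by (simp add: rmat_def vec_eq_iff)
lemma rmat_inj: "rmat A = rmat B \<Longrightarrow> A = B"
  by (simp add: rmat_def vec_eq_iff)

definition bact :: "('n::finite) blk \<Rightarrow> ((real^'n) \<times> (real^'n)) \<Rightarrow> ((real^'n) \<times> (real^'n))" where
  "bact g p = (case g of (A,B,C,D) \<Rightarrow>
     (rmat A *v fst p + rmat B *v snd p, rmat C *v fst p + rmat D *v snd p))"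

lemma bact_mult: "bact (sp_mult a b) p = bact a (bact b p)"
  by (cases a; cases b)
     (simp add: bact_def sp_mult_def rmat_mult rmat_add matrix_vector_mult_add_rdistrib
                matrix_vector_right_distrib matrix_vector_mul_assoc add_ac)

lemma bact_I[simp]: "bact bI p = p"
  by (simp add: bact_def bI_def rmat_one rmat_zero)

lemma mv_neg_l: "(- (M::'a::ring_1^'n^'m)) *v x = - (M *v x)"
  by (simp add: matrix_vector_mult_def vec_eq_iff sum_negf)

lemma bact_J: "bact bJ (x,y) = (y, -x)"
  by (simp add: bact_def bJ_def rmat_one rmat_zero rmat_neg mv_neg_l)

lemma bact_neg: "bact (bneg g) p = (- fst (bact g p), - snd (bact g p))"
  by (cases g) (simp add: bact_def bneg_def rmat_neg matrix_vector_mult_def vec_eq_iff sum_negf)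

lemma rmat_eq_from_act:
  assumes "\<And>x. rmat A *v x = rmat B *v x" shows "A = B"
  using assms by (metis matrix_eq rmat_inj)

lemma bact_inj:
  assumes "\<And>p. bact g p = bact h p" shows "g = h"
proof (cases g; cases h)
  fix A B C D A' B' C' D'
  assume g: "g = (A,B,C,D)" and h: "h = (A',B',C',D')"
  have 1: "\<And>x. bact g (x,0) = (rmat A *v x, rmat C *v x)" "\<And>x. bact h (x,0) = (rmat A' *v x, rmat C' *v x)"
    "\<And>y. bact g (0,y) = (rmat B *v y, rmat D *v y)" "\<And>y. bact h (0,y) = (rmat B' *v y, rmat D' *v y)"
    by (simp_all add: g h bact_def)
  have "A = A'" "C = C'" "B = B'" "D = D'"
    using assms 1 by (metis prod.inject rmat_eq_from_act)+
  then show "g = h" using g h by simp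
qed

definition pdot :: "((real^'n) \<times> (real^'n)) \<Rightarrow> ((real^'n) \<times> (real^'n)) \<Rightarrow> real" where
  "pdot p q = fst p \<bullet> fst q + snd p \<bullet> snd q"

lemma inner_mv: "((M::real^'n^'n) *v x) \<bullet> y = x \<bullet> (transpose M *v y)"
  by (metis dot_lmul_matrix inner_commute transpose_matrix_vector)

lemma pdot_bact: "pdot (bact g p) q = pdot p (bact (btr g) q)"
  by (cases g) (simp add: pdot_def bact_def btr_def inner_add_left inner_add_right inner_mv rmat_transpose del: transpose_matrix_vector)

lemma pdot_ext:
  assumes "\<And>p. pdot p a = pdot p b" shows "a = b"
proof -
  have "pdot (fst a - fst b, snd a - snd b) a = pdot (fst a - fst b, snd a - snd b) b" using assms .
  then have "(fst a - fst b) \<bullet> (fst a - fst b) + (snd a - snd b) \<bullet> (snd a - snd b) = 0"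
    by (simp add: pdot_def inner_diff_left inner_diff_right inner_commute algebra_simps)
  then have "fst a = fst b \<and> snd a = snd b"
    by (metis add_nonneg_eq_0_iff inner_ge_zero inner_eq_zero_iff right_minus_eq)
  then show ?thesis by (simp add: prod_eq_iff)
qed

definition sform :: "((real^'n) \<times> (real^'n)) \<Rightarrow> ((real^'n) \<times> (real^'n)) \<Rightarrow> real" where
  "sform p q = fst p \<bullet> snd q - snd p \<bullet> fst q"

lemma sform_pdot: "sform p q = pdot p (bact bJ q)"
  by (cases q) (simp add: sform_def pdot_def bact_J)

lemma sform_pres:
  assumes "\<And>p q. sform (bact g p) (bact g q) = sform p q"
  shows "sp_mult (btr g) (sp_mult bJ g) = bJ"
proof -
  have "\<And>p q. pdot p (bact (sp_mult (btr g) (sp_mult bJ g)) q) = pdot p (bact bJ q)"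
    using assms by (simp add: sform_pdot bact_mult pdot_bact[symmetric])
  then show ?thesis by (metis bact_inj pdot_ext)
qed

lemma sform_antipres:
  assumes "\<And>p q. sform (bact g p) (bact g q) = - sform p q"
  shows "sp_mult (btr g) (sp_mult bJ g) = bneg bJ"
proof -
  have n: "\<And>p q. pdot p (bact (bneg bJ) q) = - pdot p (bact bJ q)"
    by (simp add: bact_neg pdot_def)
  have "\<And>p q. pdot p (bact (sp_mult (btr g) (sp_mult bJ g)) q) = pdot p (bact (bneg bJ) q)"
  proof -
    fix p q
    have "pdot (bact g p) (bact bJ (bact g q)) = - pdot p (bact bJ q)"
      using assms[of p q] by (simp add: sform_pdot)
    then show "pdot p (bact (sp_mult (btr g) (sp_mult bJ g)) q) = pdot p (bact (bneg bJ) q)"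
      by (simp add: n bact_mult pdot_bact)
  qed
  then show ?thesis by (metis bact_inj pdot_ext)
qed

lemma sympl_transpose:
  assumes "sp_mult (btr P) (sp_mult bJ P) = bJ" "sp_mult P P' = bI"
  shows "sp_mult P (sp_mult bJ (btr P)) = bJ"
proof -
  have PP': "sp_mult P' P = bI"
  proof -
    (* P^T J P = J gives a left inverse of P, hence P' is also a left inverse *)
    have L: "sp_mult (sp_mult (bneg bJ) (sp_mult (btr P) bJ)) P = bI"
      using assms(1) by (simp add: sp_mult_assoc bneg_left bJJ)
    have "P' = sp_mult (sp_mult (sp_mult (bneg bJ) (sp_mult (btr P) bJ)) P) P'"
      using L by simp
    also have "\<dots> = sp_mult (bneg bJ) (sp_mult (btr P) bJ)"
      using assms(2) by (simp add: sp_mult_assoc)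
    finally have "P' = sp_mult (bneg bJ) (sp_mult (btr P) bJ)" .
    then show ?thesis using L by simp
  qed
  have "sp_mult (btr P) bJ = sp_mult bJ P'"
  proof -
    have "sp_mult (btr P) bJ = sp_mult (sp_mult (btr P) bJ) (sp_mult P P')" using assms(2) by simp
    also have "\<dots> = sp_mult (sp_mult (btr P) (sp_mult bJ P)) P'" by (simp add: sp_mult_assoc)
    finally show ?thesis using assms(1) by simp
  qed
  then have "btr (sp_mult (btr P) bJ) = btr (sp_mult bJ P')" by simp
  then have e: "sp_mult (bneg bJ) P = sp_mult (btr P') (bneg bJ)"
    by (simp add: btr_mult btr_bJ)
  then have e2: "sp_mult bJ P = sp_mult (btr P') bJ"
    by (metis bneg_bneg bneg_left bneg_right)
  have "sp_mult bJ (sp_mult bJ P) = sp_mult bJ (sp_mult (btr P') bJ)" using e2 by simp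
  then have Pf: "bneg P = sp_mult bJ (sp_mult (btr P') bJ)"
    by (simp add: sp_mult_assoc[symmetric] bJJ bneg_left)
  have "sp_mult (bneg P) (sp_mult bJ (btr P)) = sp_mult bJ (sp_mult (btr P') (sp_mult (sp_mult bJ bJ) (btr P)))"
    using Pf by (simp add: sp_mult_assoc)
  also have "\<dots> = bneg (sp_mult bJ (btr (sp_mult P P')))"
    by (simp add: bJJ bneg_left bneg_right btr_mult)
  also have "\<dots> = bneg bJ" using assms(2) by (simp add: btr_bI)
  finally show ?thesis by (metis bneg_bneg bneg_left)
qed

lemma antisympl_invol:
  assumes "sp_mult (btr K) (sp_mult bJ K) = bneg bJ" "sp_mult K K = bI"
  shows "sp_mult K (sp_mult bJ (btr K)) = bneg bJ"
proof -
  have "sp_mult (btr K) bJ = sp_mult (sp_mult (btr K) bJ) (sp_mult K K)" using assms(2) by simp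
  also have "\<dots> = sp_mult (sp_mult (btr K) (sp_mult bJ K)) K" by (simp add: sp_mult_assoc)
  finally have a: "sp_mult (btr K) bJ = bneg (sp_mult bJ K)" using assms(1) by (simp add: bneg_left)
  have "sp_mult bJ (sp_mult (btr K) bJ) = bneg (sp_mult (sp_mult bJ bJ) K)"
    using a by (simp add: bneg_right sp_mult_assoc)
  then have Kf: "sp_mult bJ (sp_mult (btr K) bJ) = K" by (simp add: bJJ bneg_left)
  have "sp_mult K (sp_mult bJ (btr K)) = sp_mult bJ (sp_mult (btr K) (sp_mult (sp_mult bJ bJ) (btr K)))"
    by (subst Kf[symmetric]) (simp add: sp_mult_assoc)
  also have "\<dots> = bneg (sp_mult bJ (btr (sp_mult K K)))"
    by (simp add: bJJ bneg_left bneg_right btr_mult)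
  also have "\<dots> = bneg bJ" using assms(2) by (simp add: btr_bI)
  finally show ?thesis .
qed


section \<open>Sesquilinear forms\<close>

definition sesq :: "(complex^'n \<Rightarrow> complex^'n \<Rightarrow> complex) \<Rightarrow> bool" where
  "sesq H \<longleftrightarrow> (\<forall>u u' v. H (u + u') v = H u v + H u' v) \<and>
     (\<forall>c u v. H (c *s u) v = c * H u v) \<and> (\<forall>u v. H v u = cnj (H u v))"

lemma pdh_sesq: "pos_def_hermitian H \<Longrightarrow> sesq H"
  unfolding pos_def_hermitian_def sesq_def by blast

lemma scaleR_cvec: "(r *\<^sub>R (u::complex^'n)) = complex_of_real r *s u"
  by (simp add: vec_eq_iff of_real_def)

lemma sesq_add_l: "sesq H \<Longrightarrow> H (u + u') v = H u v + H u' v"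
  unfolding sesq_def by blast
lemma sesq_smult_l: "sesq H \<Longrightarrow> H (c *s u) v = c * H u v"
  unfolding sesq_def by blast
lemma sesq_sym: "sesq H \<Longrightarrow> H v u = cnj (H u v)"
  unfolding sesq_def by blast
lemma sesq_add_r: "sesq H \<Longrightarrow> H u (v + v') = H u v + H u v'"
proof -
  assume H: "sesq H"
  have "H u (v + v') = cnj (H (v + v') u)" using sesq_sym[OF H, of u "v + v'"] .
  also have "\<dots> = cnj (H v u) + cnj (H v' u)" by (simp add: sesq_add_l[OF H])
  also have "\<dots> = H u v + H u v'" using sesq_sym[OF H, of v u] sesq_sym[OF H, of v' u] by simp
  finally show ?thesis .
qed
lemma sesq_smult_r: "sesq H \<Longrightarrow> H u (c *s v) = cnj c * H u v"
proof -
  assume H: "sesq H"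
  have "H u (c *s v) = cnj (H (c *s v) u)" using sesq_sym[OF H, of u "c *s v"] .
  also have "\<dots> = cnj c * cnj (H v u)" by (simp add: sesq_smult_l[OF H])
  also have "\<dots> = cnj c * H u v" using sesq_sym[OF H, of v u] by simp
  finally show ?thesis .
qed
lemma sesq_scaleR_l: "sesq H \<Longrightarrow> H (r *\<^sub>R u) v = of_real r * H u v"
  by (simp add: scaleR_cvec sesq_smult_l)
lemma sesq_scaleR_r: "sesq H \<Longrightarrow> H u (r *\<^sub>R v) = of_real r * H u v"
  by (simp add: scaleR_cvec sesq_smult_r)
lemma sesq_zero_l: "sesq H \<Longrightarrow> H 0 v = 0"
  using sesq_add_l[of H 0 0 v] by simp
lemma sesq_zero_r: "sesq H \<Longrightarrow> H v 0 = 0"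
  using sesq_add_r[of H v 0 0] by simp
lemma sesq_sum_l: assumes "sesq H" "finite S" shows "H (\<Sum>i\<in>S. f i) v = (\<Sum>i\<in>S. H (f i) v)"
  using assms(2) by (induction S rule: finite_induct) (simp_all add: sesq_zero_l[OF assms(1)] sesq_add_l[OF assms(1)])
lemma sesq_sum_r: assumes "sesq H" "finite S" shows "H v (\<Sum>i\<in>S. f i) = (\<Sum>i\<in>S. H v (f i))"
  using assms(2) by (induction S rule: finite_induct) (simp_all add: sesq_zero_r[OF assms(1)] sesq_add_r[OF assms(1)])
lemma Im_ofr: "Im (complex_of_real r * z) = r * Im z"
  by simp
lemma sesq_Im_antisym: "sesq H \<Longrightarrow> Im (H v u) = - Im (H u v)"
  using sesq_sym[of H v u] by simp

section \<open>Real coordinates w.r.t. a family u, v\<close>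

definition Bx :: "('n::finite \<Rightarrow> complex^'n) \<Rightarrow> ('n \<Rightarrow> complex^'n) \<Rightarrow> ((real^'n) \<times> (real^'n)) \<Rightarrow> complex^'n" where
  "Bx u v p = (\<Sum>i\<in>UNIV. fst p $ i *\<^sub>R u i + snd p $ i *\<^sub>R v i)"

lemma Bx_add: "Bx u v (p + q) = Bx u v p + Bx u v q"
  by (simp add: Bx_def scaleR_add_left sum.distrib algebra_simps)
lemma Bx_scale: "Bx u v (r *\<^sub>R p) = r *\<^sub>R Bx u v p"
  by (simp add: Bx_def scaleR_sum_right scaleR_add_right)
lemma Bx_zero[simp]: "Bx u v 0 = 0"
  by (simp add: Bx_def)
lemma Bx_neg: "Bx u v (- p) = - Bx u v p"
  by (metis Bx_scale scaleR_minus1_left)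
lemma Bx_diff: "Bx u v (p - q) = Bx u v p - Bx u v q"
  by (metis Bx_add Bx_neg diff_conv_add_uminus)
lemma Bx_sum: "finite S \<Longrightarrow> Bx u v (\<Sum>i\<in>S. f i) = (\<Sum>i\<in>S. Bx u v (f i))"
  by (induction S rule: finite_induct) (simp_all add: Bx_add)

lemma pair_expand:
  "p = (\<Sum>i\<in>UNIV. fst p $ i *\<^sub>R (axis i 1, 0) + snd p $ i *\<^sub>R (0, axis i (1::real)))"
proof -
  have f: "fst p = (\<Sum>i\<in>UNIV. fst p $ i *\<^sub>R axis i 1)" "snd p = (\<Sum>i\<in>UNIV. snd p $ i *\<^sub>R axis i 1)"
    by (metis basis_expansion scalar_mult_eq_scaleR)+
  show ?thesis
    by (rule prod_eqI) (simp_all add: fst_sum snd_sum f[symmetric])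
qed

lemma Bx_axis1: "Bx u v (axis i 1, 0) = u i"
proof -
  have "(\<Sum>j\<in>UNIV. axis i (1::real) $ j *\<^sub>R u j) = (\<Sum>j\<in>UNIV. if j = i then u j else 0)"
    by (rule sum.cong) (auto simp: axis_def)
  then show ?thesis by (simp add: Bx_def)
qed
lemma Bx_axis2: "Bx u v (0, axis i 1) = v i"
proof -
  have "(\<Sum>j\<in>UNIV. axis i (1::real) $ j *\<^sub>R v j) = (\<Sum>j\<in>UNIV. if j = i then v j else 0)"
    by (rule sum.cong) (auto simp: axis_def)
  then show ?thesis by (simp add: Bx_def)
qed

lemma bact_add: "bact K (p + q) = bact K p + bact K q"
  by (cases K) (simp add: bact_def matrix_vector_right_distrib algebra_simps)
lemma bact_scale: "bact K (r *\<^sub>R p) = r *\<^sub>R bact K p"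
  by (cases K) (simp add: bact_def matrix_vector_mult_scaleR scaleR_add_right)
lemma bact_zero[simp]: "bact K 0 = 0"
  by (cases K) (simp add: bact_def zero_prod_def)
lemma bact_sum: "finite S \<Longrightarrow> bact K (\<Sum>i\<in>S. f i) = (\<Sum>i\<in>S. bact K (f i))"
  by (induction S rule: finite_induct) (simp_all add: bact_add)

definition rlin :: "(complex^'n \<Rightarrow> complex^'n) \<Rightarrow> bool" where
  "rlin f \<longleftrightarrow> (\<forall>x y. f (x + y) = f x + f y) \<and> (\<forall>r x. f (r *\<^sub>R x) = r *\<^sub>R f x)"

lemma rlin_zero: "rlin f \<Longrightarrow> f 0 = 0"
  unfolding rlin_def by (metis scaleR_zero_left)
lemma rlin_sum: assumes "rlin f" "finite S" shows "f (\<Sum>i\<in>S. g i) = (\<Sum>i\<in>S. f (g i))"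
  using assms(2) by (induction S rule: finite_induct) (simp_all add: rlin_zero[OF assms(1)], simp add: assms(1)[unfolded rlin_def])
lemma rlin_Bx: "rlin f \<Longrightarrow> f (Bx u v p) = Bx (f \<circ> u) (f \<circ> v) p"
  unfolding Bx_def by (simp add: rlin_sum) (simp add: rlin_def)

lemma clin_rlin:
  assumes "\<forall>u v. f (u + v) = f u + f v" "\<forall>c u. f (c *s u) = c *s f u"
  shows "rlin f"
  using assms by (simp add: rlin_def scaleR_cvec)
lemma alin_rlin:
  assumes "\<forall>u v. f (u + v) = f u + f v" "\<forall>c u. f (c *s u) = cnj c *s f u"
  shows "rlin f"
  using assms by (simp add: rlin_def scaleR_cvec)

lemma map_coords:
  assumes "rlin f"
    and "\<And>i. f (u i) = Bx u' v' (rmat A *v axis i 1, rmat C *v axis i 1)"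
    and "\<And>i. f (v i) = Bx u' v' (rmat B *v axis i 1, rmat D *v axis i 1)"
  shows "f (Bx u v p) = Bx u' v' (bact (A,B,C,D) p)"
proof -
  have "f (Bx u v p) = Bx (f \<circ> u) (f \<circ> v) p" using assms(1) by (rule rlin_Bx)
  also have "\<dots> = (\<Sum>i\<in>UNIV. fst p $ i *\<^sub>R Bx u' v' (bact (A,B,C,D) (axis i 1, 0))
        + snd p $ i *\<^sub>R Bx u' v' (bact (A,B,C,D) (0, axis i 1)))"
    by (simp add: Bx_def[of "f \<circ> u"] assms(2,3) bact_def)
  also have "\<dots> = Bx u' v' (bact (A,B,C,D) (\<Sum>i\<in>UNIV. fst p $ i *\<^sub>R (axis i 1, 0) + snd p $ i *\<^sub>R (0, axis i 1)))"
    by (simp only: bact_sum[OF finite] Bx_sum[OF finite] bact_add bact_scale Bx_add Bx_scale)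
  also have "\<dots> = Bx u' v' (bact (A,B,C,D) p)"
    by (simp only: pair_expand[of p, symmetric])
  finally show ?thesis .
qed

lemma Q_Bx:
  assumes H: "sesq H"
    and rel: "\<And>i j. Im (H (u i) (v j)) = (if i = j then 1 else 0)"
       "\<And>i j. Im (H (u i) (u j)) = 0" "\<And>i j. Im (H (v i) (v j)) = 0"
  shows "Im (H (Bx u v p) (Bx u v q)) = sform p q"
proof -
  have rel2: "\<And>i j. Im (H (v i) (u j)) = - (if j = i then 1 else 0)"
    using rel(1) sesq_Im_antisym[OF H] by metis
  have four: "\<And>a b c d x y x' y'. H (a *\<^sub>R x + b *\<^sub>R y) (c *\<^sub>R x' + d *\<^sub>R y') =
      of_real (a * c) * H x x' + of_real (a * d) * H x y' + of_real (b * c) * H y x' + of_real (b * d) * H y y'"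
    by (simp add: sesq_add_l[OF H] sesq_add_r[OF H] sesq_scaleR_l[OF H] sesq_scaleR_r[OF H] algebra_simps)
  have "H (Bx u v p) (Bx u v q) = (\<Sum>i\<in>UNIV. \<Sum>j\<in>UNIV.
      H (fst p $ i *\<^sub>R u i + snd p $ i *\<^sub>R v i) (fst q $ j *\<^sub>R u j + snd q $ j *\<^sub>R v j))"
    unfolding Bx_def by (simp add: sesq_sum_l[OF H] sesq_sum_r[OF H]) (rule sum.swap)
  also have "\<dots> = (\<Sum>i\<in>UNIV. \<Sum>j\<in>UNIV.
      of_real (fst p $ i * fst q $ j) * H (u i) (u j) +
      of_real (fst p $ i * snd q $ j) * H (u i) (v j) +
      of_real (snd p $ i * fst q $ j) * H (v i) (u j) +
      of_real (snd p $ i * snd q $ j) * H (v i) (v j))"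
    by (simp only: four)
  finally have "H (Bx u v p) (Bx u v q) = \<dots>" .
  then have "Im (H (Bx u v p) (Bx u v q)) = (\<Sum>i\<in>UNIV. \<Sum>j\<in>UNIV.
      fst p $ i * snd q $ j * (if i = j then 1 else 0) - snd p $ i * fst q $ j * (if j = i then 1 else 0))"
    by (simp add: rel rel2 Im_ofr)
  also have "\<dots> = sform p q"
    by (simp add: sform_def inner_vec_def sum_subtractf if_distrib if_distribR cong: if_cong)
  finally show ?thesis .
qed


definition clin :: "(complex^'n \<Rightarrow> complex^'n) \<Rightarrow> bool" where
  "clin f \<longleftrightarrow> (\<forall>u v. f (u + v) = f u + f v) \<and> (\<forall>c u. f (c *s u) = c *s f u)"

lemma clin_add: "clin f \<Longrightarrow> f (u + v) = f u + f v" by (simp add: clin_def)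
lemma clin_smult: "clin f \<Longrightarrow> f (c *s u) = c *s f u" by (simp add: clin_def)
lemma clin_rlin': "clin f \<Longrightarrow> rlin f" by (simp add: clin_def rlin_def scaleR_cvec)
lemma clin_zero: "clin f \<Longrightarrow> f 0 = 0" using clin_add[of f 0 0] by simp
lemma clin_neg: "clin f \<Longrightarrow> f (- u) = - f u"
  using clin_add[of f u "-u"] clin_zero[of f] by (simp add: eq_neg_iff_add_eq_0 add.commute)
lemma clin_diff: "clin f \<Longrightarrow> f (u - v) = f u - f v"
  by (metis clin_add clin_neg diff_conv_add_uminus)
lemma clin_sum: assumes "clin f" "finite S" shows "f (\<Sum>i\<in>S. g i) = (\<Sum>i\<in>S. f (g i))"
  using assms(2) by (induction S rule: finite_induct) (simp_all add: clin_zero[OF assms(1)] clin_add[OF assms(1)])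
lemma clin_comp: "clin f \<Longrightarrow> clin g \<Longrightarrow> clin (f \<circ> g)" by (simp add: clin_def)
lemma clin_inv: assumes "clin f" "bij f" shows "clin (inv f)"
proof -
  have fi: "\<And>x. f (inv f x) = x" using assms(2) by (simp add: bij_is_surj surj_f_inv_f)
  have if': "\<And>x. inv f (f x) = x" using assms(2) by (simp add: bij_is_inj)
  show ?thesis unfolding clin_def
  proof (intro conjI allI)
    fix u v show "inv f (u + v) = inv f u + inv f v"
      by (metis fi if' clin_add[OF assms(1)])
  next
    fix c u show "inv f (c *s u) = c *s inv f u"
      by (metis fi if' clin_smult[OF assms(1)])
  qed
qed

section \<open>Integer lattices\<close>

definition zv :: "('n::finite \<Rightarrow> int) \<Rightarrow> real^'n" where
  "zv a = (\<chi> i. real_of_int (a i))"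

definition ZZ :: "(((real^'n) \<times> (real^'n))) set" where
  "ZZ = {(zv a, zv b) | a b. True}"

lemma zv_add: "zv a + zv b = zv (\<lambda>i. a i + b i)" by (simp add: zv_def vec_eq_iff)
lemma zv_neg: "- zv a = zv (\<lambda>i. - a i)" by (simp add: zv_def vec_eq_iff)
lemma zv_zero: "0 = zv (\<lambda>i. 0)" by (simp add: zv_def vec_eq_iff)
lemma ZZ_add: "p \<in> ZZ \<Longrightarrow> q \<in> ZZ \<Longrightarrow> p + q \<in> ZZ"
  unfolding ZZ_def by (auto simp: zv_add)
lemma ZZ_neg: "p \<in> ZZ \<Longrightarrow> - p \<in> ZZ"
  unfolding ZZ_def by (auto simp: zv_neg)
lemma ZZ_zero: "0 \<in> ZZ"
  unfolding ZZ_def zero_prod_def by (auto simp: zv_zero)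
lemma ZZ_diff: "p \<in> ZZ \<Longrightarrow> q \<in> ZZ \<Longrightarrow> p - q \<in> ZZ"
  by (metis ZZ_add ZZ_neg diff_conv_add_uminus)

lemma Lint_Bx: "(\<Sum>i\<in>UNIV. of_int (a i) *s u i + of_int (b i) *s v i) = Bx u v (zv a, zv b)"
proof -
  have "\<And>i. (of_int (a i) :: complex) *s u i = real_of_int (a i) *\<^sub>R u i"
       "\<And>i. (of_int (b i) :: complex) *s v i = real_of_int (b i) *\<^sub>R v i"
    by (simp_all add: scaleR_cvec)
  then show ?thesis by (simp add: Bx_def zv_def)
qed

lemma sb_L: "symplectic_basis L Q u v \<Longrightarrow> L = Bx u v ` ZZ"
  unfolding symplectic_basis_def ZZ_def by (auto simp: Lint_Bx)

lemma sb_inj: assumes "symplectic_basis L Q u v" "Bx u v p = Bx u v q" shows "p = q"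
proof -
  have "Bx u v (p - q) = 0" using assms(2) by (simp add: Bx_diff)
  then have "(\<Sum>i\<in>UNIV. fst (p - q) $ i *\<^sub>R u i + snd (p - q) $ i *\<^sub>R v i) = 0" by (simp add: Bx_def)
  then have "(\<lambda>i. fst (p - q) $ i) = (\<lambda>_. 0) \<and> (\<lambda>i. snd (p - q) $ i) = (\<lambda>_. 0)"
    using assms(1) unfolding symplectic_basis_def by blast
  then have "fst (p - q) = 0" "snd (p - q) = 0" by (auto simp: vec_eq_iff fun_eq_iff)
  then show ?thesis by (simp add: prod_eq_iff)
qed

lemma sb_add: assumes "symplectic_basis L Q u v" "x \<in> L" "y \<in> L" shows "x + y \<in> L"
proof -
  obtain p q where "p \<in> ZZ" "q \<in> ZZ" "x = Bx u v p" "y = Bx u v q" using assms sb_L[OF assms(1)] by blast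
  then show ?thesis using sb_L[OF assms(1)] ZZ_add by (metis Bx_add imageI)
qed
lemma sb_neg: assumes "symplectic_basis L Q u v" "x \<in> L" shows "- x \<in> L"
proof -
  obtain p where "p \<in> ZZ" "x = Bx u v p" using assms sb_L[OF assms(1)] by blast
  then show ?thesis using sb_L[OF assms(1)] ZZ_neg by (metis Bx_neg imageI)
qed
lemma sb_diff: "symplectic_basis L Q u v \<Longrightarrow> x \<in> L \<Longrightarrow> y \<in> L \<Longrightarrow> x - y \<in> L"
  by (metis sb_add sb_neg diff_conv_add_uminus)
lemma sb_zero: "symplectic_basis L Q u v \<Longrightarrow> 0 \<in> L"
  by (metis sb_L Bx_zero ZZ_zero imageI)
lemma sb_u: "symplectic_basis L Q u v \<Longrightarrow> u i \<in> L"
proof -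
  assume sb: "symplectic_basis L Q u v"
  have "(axis i 1, 0) \<in> ZZ" unfolding ZZ_def
    by (rule CollectI, rule exI[of _ "\<lambda>j. if j = i then 1 else 0"], rule exI[of _ "\<lambda>_. 0"])
       (simp add: zv_def axis_def vec_eq_iff)
  then show ?thesis using sb_L[OF sb] Bx_axis1 by (metis imageI)
qed
lemma sb_v: "symplectic_basis L Q u v \<Longrightarrow> v i \<in> L"
proof -
  assume sb: "symplectic_basis L Q u v"
  have "(0, axis i 1) \<in> ZZ" unfolding ZZ_def
    by (rule CollectI, rule exI[of _ "\<lambda>_. 0"], rule exI[of _ "\<lambda>j. if j = i then 1 else 0"])
       (simp add: zv_def axis_def vec_eq_iff)
  then show ?thesis using sb_L[OF sb] Bx_axis2 by (metis imageI)
qed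

lemma invN_scale: "(1 / of_int N :: complex) *s w = (1 / real_of_int N) *\<^sub>R w"
  by (simp add: scaleR_cvec)

lemma zv_div:
  assumes "(1 / real_of_int N) *\<^sub>R zv a = zv b" "N \<noteq> 0" shows "N dvd a i"
proof -
  have "(1 / real_of_int N) * real_of_int (a i) = real_of_int (b i)"
    using assms(1) by (simp add: zv_def vec_eq_iff)
  then have "real_of_int (a i) = real_of_int N * real_of_int (b i)"
    using assms(2) by (simp add: field_simps)
  then have "a i = N * b i" by (metis of_int_eq_iff of_int_mult)
  then show ?thesis by simp
qed

lemma ZZ_div:
  assumes sb: "symplectic_basis L Q u v" and N: "N \<noteq> 0"
    and p: "p = (zv a, zv b)" and mem: "(1 / real_of_int N) *\<^sub>R Bx u v p \<in> L"
  shows "N dvd a i" "N dvd b i"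
proof -
  obtain q where q: "q \<in> ZZ" "(1 / real_of_int N) *\<^sub>R Bx u v p = Bx u v q"
    using mem sb_L[OF sb] by auto
  then have "(1 / real_of_int N) *\<^sub>R p = q" using sb_inj[OF sb] by (simp add: Bx_scale)
  moreover obtain a' b' where "q = (zv a', zv b')" using q(1) unfolding ZZ_def by auto
  ultimately have "(1 / real_of_int N) *\<^sub>R zv a = zv a'" "(1 / real_of_int N) *\<^sub>R zv b = zv b'"
    using p by auto
  then show "N dvd a i" "N dvd b i" using zv_div N by blast+
qed

lemma rpl_unfold:
  assumes "real_ppav_level N X"
  obtains u v where "pos_def_hermitian (herm X)" "antilinear_involution (kap X)"
    "kap X ` lat X = lat X" "\<And>a b. Im (herm X (kap X a) (kap X b)) = - Im (herm X a b)"
    "symplectic_basis (lat X) (\<lambda>a b. Im (herm X a b)) u v"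
    "\<And>i. lvlU X i - (1 / of_int N) *s u i \<in> lat X" "\<And>i. lvlV X i - (1 / of_int N) *s v i \<in> lat X"
    "\<And>i. kap X ((1 / of_int N) *s u i) + (1 / of_int N) *s u i \<in> lat X"
    "\<And>i. kap X ((1 / of_int N) *s v i) - (1 / of_int N) *s v i \<in> lat X"
  using assms unfolding real_ppav_level_def Let_def by blast

lemma rpl_sb: assumes "real_ppav_level N X" obtains u v where "symplectic_basis (lat X) (\<lambda>a b. Im (herm X a b)) u v"
  using rpl_unfold[OF assms] by metis

lemma iso_unfold:
  assumes "rppav_iso X Y f"
  shows "clin f" "bij f" "f ` lat X = lat Y" "\<And>a b. herm Y (f a) (f b) = herm X a b"
    "\<And>a. f (kap X a) = kap Y (f a)"
    "\<And>i. f (lvlU X i) - lvlU Y i \<in> lat Y" "\<And>i. f (lvlV X i) - lvlV Y i \<in> lat Y"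
  using assms unfolding rppav_iso_def clin_def by (auto simp: fun_eq_iff)

lemma iso_intro:
  assumes "clin f" "bij f" "f ` lat X = lat Y" "\<And>a b. herm Y (f a) (f b) = herm X a b"
    "\<And>a. f (kap X a) = kap Y (f a)"
    "\<And>i. f (lvlU X i) - lvlU Y i \<in> lat Y" "\<And>i. f (lvlV X i) - lvlV Y i \<in> lat Y"
  shows "rppav_iso X Y f"
  using assms unfolding rppav_iso_def clin_def by (auto simp: fun_eq_iff)

section \<open>Isomorphisms: inverse, composition, transport\<close>

lemma iso_inv:
  assumes iso: "rppav_iso X Y f" and X: "real_ppav_level N X"
  shows "rppav_iso Y X (inv f)"
proof -
  note I = iso_unfold[OF iso]
  obtain u v where sb: "symplectic_basis (lat X) (\<lambda>a b. Im (herm X a b)) u v" using rpl_sb[OF X] .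
  have fi: "\<And>x. f (inv f x) = x" using I(2) by (simp add: bij_is_surj surj_f_inv_f)
  have if': "\<And>x. inv f (f x) = x" using I(2) by (simp add: bij_is_inj)
  have ci: "clin (inv f)" using clin_inv I by blast
  have "inv f ` lat Y = inv f ` (f ` lat X)" using I(3) by simp
  also have "\<dots> = lat X" using if' by (simp add: image_image)
  finally have lY: "inv f ` lat Y = lat X" .
  show ?thesis
  proof (rule iso_intro)
    show "clin (inv f)" by (rule ci)
    show "bij (inv f)" using I(2) by (simp add: bij_imp_bij_inv)
    show "inv f ` lat Y = lat X" by (rule lY)
    show "\<And>a b. herm X (inv f a) (inv f b) = herm Y a b" by (metis I(4) fi)
    show "\<And>a. inv f (kap Y a) = kap X (inv f a)" by (metis I(5) fi if')
    show "inv f (lvlU Y i) - lvlU X i \<in> lat X" for i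
    proof -
      have "inv f (f (lvlU X i) - lvlU Y i) \<in> lat X" using I(6)[of i] lY by blast
      then have "- (inv f (f (lvlU X i) - lvlU Y i)) \<in> lat X" using sb_neg[OF sb] by blast
      then show ?thesis by (simp add: clin_diff[OF ci] if')
    qed
    show "inv f (lvlV Y i) - lvlV X i \<in> lat X" for i
    proof -
      have "inv f (f (lvlV X i) - lvlV Y i) \<in> lat X" using I(7)[of i] lY by blast
      then have "- (inv f (f (lvlV X i) - lvlV Y i)) \<in> lat X" using sb_neg[OF sb] by blast
      then show ?thesis by (simp add: clin_diff[OF ci] if')
    qed
  qed
qed

lemma iso_comp:
  assumes f: "rppav_iso X Y f" and g: "rppav_iso Y W g" and W: "real_ppav_level N W"
  shows "rppav_iso X W (g \<circ> f)"
proof -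
  note F = iso_unfold[OF f] and G = iso_unfold[OF g]
  obtain u v where sb: "symplectic_basis (lat W) (\<lambda>a b. Im (herm W a b)) u v" using rpl_sb[OF W] .
  show ?thesis
  proof (rule iso_intro)
    show "clin (g \<circ> f)" using F(1) G(1) by (rule clin_comp[rotated])
    show "bij (g \<circ> f)" using F(2) G(2) by (rule bij_comp)
    show "(g \<circ> f) ` lat X = lat W" using F(3) G(3) by (metis image_comp)
    show "\<And>a b. herm W ((g \<circ> f) a) ((g \<circ> f) b) = herm X a b" using F(4) G(4) by simp
    show "\<And>a. (g \<circ> f) (kap X a) = kap W ((g \<circ> f) a)" using F(5) G(5) by simp
    show "(g \<circ> f) (lvlU X i) - lvlU W i \<in> lat W" for i
    proof -
      have "g (f (lvlU X i) - lvlU Y i) \<in> lat W" using F(6)[of i] G(3) by blast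
      then have "g (f (lvlU X i) - lvlU Y i) + (g (lvlU Y i) - lvlU W i) \<in> lat W"
        using G(6)[of i] sb_add[OF sb] by blast
      then show ?thesis by (simp add: clin_diff[OF G(1)])
    qed
    show "(g \<circ> f) (lvlV X i) - lvlV W i \<in> lat W" for i
    proof -
      have "g (f (lvlV X i) - lvlV Y i) \<in> lat W" using F(7)[of i] G(3) by blast
      then have "g (f (lvlV X i) - lvlV Y i) + (g (lvlV Y i) - lvlV W i) \<in> lat W"
        using G(7)[of i] sb_add[OF sb] by blast
      then show ?thesis by (simp add: clin_diff[OF G(1)])
    qed
  qed
qed


lemma transport:
  assumes iso: "rppav_iso Y X f" and X: "real_ppav_level N X"
  shows "real_ppav_level N Y"
proof -
  note I = iso_unfold[OF iso]
  obtain u v where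
    pdh: "pos_def_hermitian (herm X)" and ai: "antilinear_involution (kap X)"
    and kL: "kap X ` lat X = lat X" and Qa: "\<And>a b. Im (herm X (kap X a) (kap X b)) = - Im (herm X a b)"
    and sb: "symplectic_basis (lat X) (\<lambda>a b. Im (herm X a b)) u v"
    and lU: "\<And>i. lvlU X i - (1 / of_int N) *s u i \<in> lat X"
    and lV: "\<And>i. lvlV X i - (1 / of_int N) *s v i \<in> lat X"
    and kU: "\<And>i. kap X ((1 / of_int N) *s u i) + (1 / of_int N) *s u i \<in> lat X"
    and kV: "\<And>i. kap X ((1 / of_int N) *s v i) - (1 / of_int N) *s v i \<in> lat X"
    using rpl_unfold[OF X] by blast
  define g where "g = inv f"
  have fg: "\<And>x. f (g x) = x" unfolding g_def using I(2) by (simp add: bij_is_surj surj_f_inv_f)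
  have gf: "\<And>x. g (f x) = x" unfolding g_def using I(2) by (simp add: bij_is_inj)
  have cg: "clin g" unfolding g_def using clin_inv I by blast
  have cf: "clin f" using I(1) .
  have hY: "\<And>a b. herm Y a b = herm X (f a) (f b)" using I(4) by simp
  have kY: "\<And>a. kap Y a = g (kap X (f a))" by (metis I(5) gf)
  have lY: "lat Y = g ` lat X"
  proof -
    have "g ` lat X = g ` (f ` lat Y)" using I(3) by simp
    also have "\<dots> = lat Y" using gf by (simp add: image_image)
    finally show ?thesis by simp
  qed
  from pdh have H1: "\<And>u u' v. herm X (u + u') v = herm X u v + herm X u' v"
    and H2: "\<And>c u v. herm X (c *s u) v = c * herm X u v"
    and H3: "\<And>u v. herm X v u = cnj (herm X u v)"
    and H4: "\<And>u. u \<noteq> 0 \<Longrightarrow> Re (herm X u u) > 0 \<and> Im (herm X u u) = 0"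
    unfolding pos_def_hermitian_def by blast+
  from ai have K1: "\<And>u v. kap X (u + v) = kap X u + kap X v"
    and K2: "\<And>c u. kap X (c *s u) = cnj c *s kap X u"
    and K3: "\<And>u. kap X (kap X u) = u"
    unfolding antilinear_involution_def by blast+
  have f0: "\<And>a. a \<noteq> 0 \<Longrightarrow> f a \<noteq> 0" by (metis clin_zero[OF cf] gf)
  have pdhY: "pos_def_hermitian (herm Y)"
    unfolding pos_def_hermitian_def hY
  proof (intro conjI allI impI)
    fix a a' b :: "complex^'a" show "herm X (f (a + a')) (f b) = herm X (f a) (f b) + herm X (f a') (f b)"
      by (simp only: clin_add[OF cf] H1)
  next
    fix c and a b :: "complex^'a" show "herm X (f (c *s a)) (f b) = c * herm X (f a) (f b)"
      by (simp only: clin_smult[OF cf] H2)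
  next
    fix a b :: "complex^'a" show "herm X (f b) (f a) = cnj (herm X (f a) (f b))" by (rule H3)
  next
    fix a :: "complex^'a" assume "a \<noteq> 0"
    then show "0 < Re (herm X (f a) (f a))" "Im (herm X (f a) (f a)) = 0" using H4 f0 by blast+
  qed
  have aiY: "antilinear_involution (kap Y)"
    unfolding antilinear_involution_def kY
    by (simp add: clin_add[OF cf] clin_smult[OF cf] clin_add[OF cg] clin_smult[OF cg] K1 K2 K3 fg gf)
  have kLY: "kap Y ` lat Y = lat Y"
  proof -
    have "kap Y ` lat Y = g ` kap X ` f ` g ` lat X" unfolding lY by (simp add: kY image_image)
    also have "\<dots> = g ` kap X ` lat X" by (simp add: image_image fg)
    also have "\<dots> = lat Y" using kL lY by simp
    finally show ?thesis .
  qed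
  have QaY: "\<And>a b. Im (herm Y (kap Y a) (kap Y b)) = - Im (herm Y a b)"
    by (simp add: hY kY fg Qa)
  define u' where "u' = g \<circ> u"
  define v' where "v' = g \<circ> v"
  from sb have S1: "\<And>a b :: 'a \<Rightarrow> real. (\<Sum>i\<in>UNIV. a i *\<^sub>R u i + b i *\<^sub>R v i) = 0 \<Longrightarrow> a = (\<lambda>_. 0) \<and> b = (\<lambda>_. 0)"
    and S2: "lat X = {(\<Sum>i\<in>UNIV. of_int (a i) *s u i + of_int (b i) *s v i) | a b :: 'a \<Rightarrow> int. True}"
    and S3: "\<And>i j. Im (herm X (u i) (v j)) = (if i = j then 1 else 0) \<and> Im (herm X (u i) (u j)) = 0 \<and> Im (herm X (v i) (v j)) = 0"
    unfolding symplectic_basis_def by blast+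
  have rf: "rlin f" using clin_rlin'[OF cf] .
  have sbY: "symplectic_basis (lat Y) (\<lambda>a b. Im (herm Y a b)) u' v'"
    unfolding symplectic_basis_def
  proof (intro conjI allI impI)
    fix a b :: "'a \<Rightarrow> real"
    assume "(\<Sum>i\<in>UNIV. a i *\<^sub>R u' i + b i *\<^sub>R v' i) = 0"
    then have "f (\<Sum>i\<in>UNIV. a i *\<^sub>R u' i + b i *\<^sub>R v' i) = 0" using clin_zero[OF cf] by simp
    then have "(\<Sum>i\<in>UNIV. a i *\<^sub>R u i + b i *\<^sub>R v i) = 0"
      using rf by (simp add: rlin_sum[OF rf] u'_def v'_def fg) (simp add: rlin_def fg)
    then show "a = (\<lambda>_. 0)" "b = (\<lambda>_. 0)" using S1 by blast+
  next
    have gF: "\<And>a b. g (\<Sum>i\<in>UNIV. of_int (a i) *s u i + of_int (b i) *s v i) =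
                    (\<Sum>i\<in>UNIV. of_int (a i) *s u' i + of_int (b i) *s v' i)"
      by (simp add: clin_sum[OF cg] clin_add[OF cg] clin_smult[OF cg] u'_def v'_def)
    show "lat Y = {(\<Sum>i\<in>UNIV. of_int (a i) *s u' i + of_int (b i) *s v' i) | a b :: 'a \<Rightarrow> int. True}"
      unfolding lY S2 by (simp only: gF[symmetric]) blast
  next
    fix i j
    show "Im (herm Y (u' i) (v' j)) = (if i = j then 1 else 0)"
         "Im (herm Y (u' i) (u' j)) = 0" "Im (herm Y (v' i) (v' j)) = 0"
      using S3 by (simp_all add: hY u'_def v'_def fg)
  qed
  have inLY: "\<And>x. x \<in> lat X \<Longrightarrow> g x \<in> lat Y" using lY by blast
  have lUY: "lvlU Y i - (1 / of_int N) *s u' i \<in> lat Y" for i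
  proof -
    have "(f (lvlU Y i) - lvlU X i) + (lvlU X i - (1 / of_int N) *s u i) \<in> lat X"
      using sb_add[OF sb I(6)[of i] lU[of i]] .
    then have "g (f (lvlU Y i) - (1 / of_int N) *s u i) \<in> lat Y" using inLY by simp
    then show ?thesis by (simp add: clin_diff[OF cg] clin_smult[OF cg] gf u'_def)
  qed
  have lVY: "lvlV Y i - (1 / of_int N) *s v' i \<in> lat Y" for i
  proof -
    have "(f (lvlV Y i) - lvlV X i) + (lvlV X i - (1 / of_int N) *s v i) \<in> lat X"
      using sb_add[OF sb I(7)[of i] lV[of i]] .
    then have "g (f (lvlV Y i) - (1 / of_int N) *s v i) \<in> lat Y" using inLY by simp
    then show ?thesis by (simp add: clin_diff[OF cg] clin_smult[OF cg] gf v'_def)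
  qed
  have kUY: "kap Y ((1 / of_int N) *s u' i) + (1 / of_int N) *s u' i \<in> lat Y" for i
  proof -
    have "g (kap X ((1 / of_int N) *s u i) + (1 / of_int N) *s u i) \<in> lat Y" using inLY kU by blast
    then show ?thesis by (simp add: kY clin_add[OF cg] clin_smult[OF cg] clin_smult[OF cf] fg u'_def)
  qed
  have kVY: "kap Y ((1 / of_int N) *s v' i) - (1 / of_int N) *s v' i \<in> lat Y" for i
  proof -
    have "g (kap X ((1 / of_int N) *s v i) - (1 / of_int N) *s v i) \<in> lat Y" using inLY kV by blast
    then show ?thesis by (simp add: kY clin_diff[OF cg] clin_smult[OF cg] clin_smult[OF cf] fg v'_def)
  qed
  show ?thesis
    unfolding real_ppav_level_def Let_def
    apply (intro conjI pdhY aiY kLY)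
    subgoal using QaY by blast
    apply (rule exI[of _ u'], rule exI[of _ v'])
    using sbY lUY lVY kUY kVY by blast
qed


section \<open>The Siegel space\<close>

definition rv :: "real^'n \<Rightarrow> complex^'n" where
  "rv x = (\<chi> i. complex_of_real (x$i))"

definition ReM :: "complex^'n^'n \<Rightarrow> real^'n^'n" where
  "ReM Z = (\<chi> i j. Re (Z$i$j))"

lemma rv_nth: "rv x $ k = complex_of_real (x $ k)"
  by (simp add: rv_def)

lemma F_Z_rv: "F_Z Z x y = Z *v rv x + rv y"
  by (simp add: F_Z_def rv_def)

lemma mv_axis: "((A::'a::semiring_1^'n^'m) *v axis i 1) $ k = A $ k $ i"
proof -
  have "(\<Sum>j\<in>UNIV. A $ k $ j * axis i 1 $ j) = (\<Sum>j\<in>UNIV. if j = i then A $ k $ j else 0)"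
    by (rule sum.cong) (auto simp: axis_def)
  then show ?thesis by (simp add: matrix_vector_mult_def)
qed

lemma axis_nth: "axis i (1::'a::zero_neq_one) $ k = (if k = i then 1 else 0)"
  by (simp add: axis_def)

lemma Im_mv_rv: "Im ((Z *v rv x) $ k) = (ImM Z *v x) $ k"
  by (simp add: matrix_vector_mult_def rv_def ImM_def)
lemma Re_mv_rv: "Re ((Z *v rv x) $ k) = (ReM Z *v x) $ k"
  by (simp add: matrix_vector_mult_def rv_def ReM_def)

lemma siegel_sym: "Z \<in> siegel \<Longrightarrow> transpose Z = Z" by (simp add: siegel_def)
lemma siegel_pd: "Z \<in> siegel \<Longrightarrow> posdef_real (ImM Z)" by (simp add: siegel_def)

lemma transpose_entry: "transpose A $ i $ j = A $ j $ i"
  by (simp add: transpose_def)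
lemma siegel_entry_sym: "Z \<in> siegel \<Longrightarrow> Z $ i $ j = Z $ j $ i"
  using transpose_entry[of Z i j] siegel_sym[of Z] by simp

lemma ImM_sym: "Z \<in> siegel \<Longrightarrow> transpose (ImM Z) = ImM Z"
  by (simp add: ImM_def transpose_def vec_eq_iff siegel_entry_sym)
lemma ReM_sym: "Z \<in> siegel \<Longrightarrow> transpose (ReM Z) = ReM Z"
  by (simp add: ReM_def transpose_def vec_eq_iff siegel_entry_sym)

lemma posdef_inj: assumes "posdef_real Y" "Y *v x = 0" shows "x = 0"
  using assms unfolding posdef_real_def by force

lemma F_inj:
  assumes Z: "Z \<in> siegel" and e: "F_Z Z x y = F_Z Z x' y'"
  shows "x = x' \<and> y = y'"
proof -
  have "\<And>k. Im ((Z *v rv x + rv y) $ k) = Im ((Z *v rv x' + rv y') $ k)" using e by (simp add: F_Z_rv)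
  then have "\<And>k. (ImM Z *v x) $ k = (ImM Z *v x') $ k" by (simp add: Im_mv_rv rv_nth)
  then have "ImM Z *v (x - x') = 0" by (simp add: vec_eq_iff matrix_vector_mult_diff_distrib)
  then have "x - x' = 0" using posdef_inj[OF siegel_pd[OF Z]] by blast
  then have xx: "x = x'" by simp
  then have "rv y = rv y'" using e by (simp add: F_Z_rv)
  then have "y = y'" by (simp add: rv_def vec_eq_iff)
  then show ?thesis using xx by simp
qed

definition GZ :: "complex^'n^'n \<Rightarrow> real^'n^'n" where
  "GZ Z = matrix_inv (ImM Z)"

lemma siegel_inv:
  assumes Z: "Z \<in> siegel"
  shows "ImM Z ** GZ Z = mat 1" "GZ Z ** ImM Z = mat 1"
proof -
  have "\<exists>B. B ** ImM Z = mat 1"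
    using matrix_left_invertible_ker posdef_inj[OF siegel_pd[OF Z]] by blast
  then have "invertible (ImM Z)" using invertible_left_inverse by blast
  then have ex: "\<exists>A'. ImM Z ** A' = mat 1 \<and> A' ** ImM Z = mat 1" unfolding invertible_def .
  show "ImM Z ** GZ Z = mat 1" "GZ Z ** ImM Z = mat 1"
    unfolding GZ_def matrix_inv_def using someI_ex[OF ex] by blast+
qed

lemma GZ_sym:
  assumes Z: "Z \<in> siegel" shows "transpose (GZ Z) = GZ Z"
proof -
  have "transpose (GZ Z) ** ImM Z = mat 1"
    using siegel_inv(1)[OF Z] ImM_sym[OF Z] by (metis matrix_transpose_mul transpose_mat)
  then have "transpose (GZ Z) = transpose (GZ Z) ** (ImM Z ** GZ Z)" using siegel_inv(1)[OF Z] by simp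
  also have "\<dots> = GZ Z" by (simp add: matrix_mul_assoc \<open>transpose (GZ Z) ** ImM Z = mat 1\<close>)
  finally show ?thesis .
qed

lemma GZ_entry_sym: "Z \<in> siegel \<Longrightarrow> GZ Z $ i $ j = GZ Z $ j $ i"
  using transpose_entry[of "GZ Z" i j] GZ_sym[of Z] by simp

lemma H_Z_GZ: "H_Z Z u v = (\<Sum>i\<in>UNIV. \<Sum>j\<in>UNIV. u$i * complex_of_real (GZ Z $i$j) * cnj (v$j))"
  by (simp add: H_Z_def GZ_def)

lemma H_Z_sesq: assumes Z: "Z \<in> siegel" shows "sesq (H_Z Z)"
  unfolding sesq_def H_Z_GZ
proof (intro conjI allI)
  fix u u' v :: "complex^'a"
  show "(\<Sum>i\<in>UNIV. \<Sum>j\<in>UNIV. (u + u') $ i * complex_of_real (GZ Z $ i $ j) * cnj (v $ j)) =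
    (\<Sum>i\<in>UNIV. \<Sum>j\<in>UNIV. u $ i * complex_of_real (GZ Z $ i $ j) * cnj (v $ j)) +
    (\<Sum>i\<in>UNIV. \<Sum>j\<in>UNIV. u' $ i * complex_of_real (GZ Z $ i $ j) * cnj (v $ j))"
    by (simp add: distrib_right sum.distrib)
next
  fix c and u v :: "complex^'a"
  show "(\<Sum>i\<in>UNIV. \<Sum>j\<in>UNIV. (c *s u) $ i * complex_of_real (GZ Z $ i $ j) * cnj (v $ j)) =
    c * (\<Sum>i\<in>UNIV. \<Sum>j\<in>UNIV. u $ i * complex_of_real (GZ Z $ i $ j) * cnj (v $ j))"
    by (simp add: sum_distrib_left mult.assoc)
next
  fix u v :: "complex^'a"
  have "(\<Sum>i\<in>UNIV. \<Sum>j\<in>UNIV. v $ i * complex_of_real (GZ Z $ i $ j) * cnj (u $ j))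
      = (\<Sum>j\<in>UNIV. \<Sum>i\<in>UNIV. v $ i * complex_of_real (GZ Z $ i $ j) * cnj (u $ j))"
    by (rule sum.swap)
  also have "\<dots> = (\<Sum>j\<in>UNIV. \<Sum>i\<in>UNIV. cnj (u $ j * complex_of_real (GZ Z $ j $ i) * cnj (v $ i)))"
    by (simp add: GZ_entry_sym[OF Z] mult_ac)
  finally show "(\<Sum>i\<in>UNIV. \<Sum>j\<in>UNIV. v $ i * complex_of_real (GZ Z $ i $ j) * cnj (u $ j)) =
    cnj (\<Sum>i\<in>UNIV. \<Sum>j\<in>UNIV. u $ i * complex_of_real (GZ Z $ i $ j) * cnj (v $ j))"
    by simp
qed

lemma mv_rv_nth: "(Z *v rv x) $ k = (\<Sum>j\<in>UNIV. Z $ k $ j * complex_of_real (x $ j))"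
  by (simp add: matrix_vector_mult_def rv_nth)

lemma F_Z_Bx: "F_Z Z x y = Bx (\<lambda>i. Z *v axis i 1) (\<lambda>i. axis i 1) (x, y)"
proof (rule iffD2[OF vec_eq_iff], rule allI)
  fix k
  have a: "(Bx (\<lambda>i. Z *v axis i 1) (\<lambda>i. axis i 1) (x, y)) $ k =
      (\<Sum>i\<in>UNIV. x $ i *\<^sub>R Z $ k $ i) + (\<Sum>i\<in>UNIV. y $ i *\<^sub>R (axis i 1 :: complex^_) $ k)"
    by (simp add: Bx_def mv_axis sum.distrib)
  have b: "(\<Sum>i\<in>UNIV. y $ i *\<^sub>R (axis i 1 :: complex^_) $ k) = complex_of_real (y $ k)"
  proof -
    have "(\<Sum>i\<in>UNIV. y $ i *\<^sub>R (axis i 1 :: complex^_) $ k) = (\<Sum>i\<in>UNIV. if i = k then complex_of_real (y $ i) else 0)"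
      by (rule sum.cong) (auto simp: axis_nth scaleR_conv_of_real)
    then show ?thesis by simp
  qed
  have c: "(\<Sum>i\<in>UNIV. x $ i *\<^sub>R Z $ k $ i) = (\<Sum>j\<in>UNIV. Z $ k $ j * complex_of_real (x $ j))"
    by (rule sum.cong) (auto simp: scaleR_conv_of_real mult.commute)
  show "F_Z Z x y $ k = Bx (\<lambda>i. Z *v axis i 1) (\<lambda>i. axis i 1) (x, y) $ k"
    unfolding a b c by (simp add: F_Z_rv mv_rv_nth rv_nth)
qed


lemma trip: "((transpose A ** B) ** C) $ i $ j = (\<Sum>k\<in>UNIV. \<Sum>l\<in>UNIV. A$k$i * B$k$l * (C$l$j :: 'a::comm_semiring_1))"
proof -
  have "((transpose A ** B) ** C) $ i $ j = (\<Sum>l\<in>UNIV. \<Sum>k\<in>UNIV. A$k$i * B$k$l * C$l$j)"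
    by (simp add: matrix_matrix_mult_def transpose_def sum_distrib_right)
  also have "\<dots> = (\<Sum>k\<in>UNIV. \<Sum>l\<in>UNIV. A$k$i * B$k$l * C$l$j)" by (rule sum.swap)
  finally show ?thesis .
qed

lemma Im_prod3: "Im (a * complex_of_real g * cnj b) = g * (Im a * Re b - Re a * Im b)"
  by (simp add: algebra_simps)

lemma HZ_rel1:
  assumes Z: "Z \<in> siegel"
  shows "Im (H_Z Z (Z *v axis i 1) (axis j 1)) = (if i = j then 1 else 0)"
proof -
  have inner: "\<And>k. (\<Sum>l\<in>UNIV. (Z *v axis i 1) $ k * complex_of_real (GZ Z $ k $ l) * cnj ((axis j 1 :: complex^_) $ l))
      = Z $ k $ i * complex_of_real (GZ Z $ k $ j)"
  proof -
    fix k
    have "(\<Sum>l\<in>UNIV. (Z *v axis i 1) $ k * complex_of_real (GZ Z $ k $ l) * cnj ((axis j 1 :: complex^_) $ l))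
      = (\<Sum>l\<in>UNIV. if l = j then Z $ k $ i * complex_of_real (GZ Z $ k $ l) else 0)"
      by (rule sum.cong) (auto simp: mv_axis axis_nth)
    then show "?thesis k" by simp
  qed
  have "Im (H_Z Z (Z *v axis i 1) (axis j 1)) = (\<Sum>k\<in>UNIV. ImM Z $ k $ i * GZ Z $ k $ j)"
    by (simp add: H_Z_GZ inner ImM_def)
  also have "\<dots> = (transpose (ImM Z) ** GZ Z) $ i $ j"
    by (simp add: matrix_matrix_mult_def transpose_def)
  also have "\<dots> = (if i = j then 1 else 0)"
    by (simp add: ImM_sym[OF Z] siegel_inv[OF Z] mat_def)
  finally show ?thesis .
qed

lemma HZ_rel2:
  shows "Im (H_Z Z (axis i 1) (axis j 1)) = 0"
proof -
  have "\<And>k. Im ((axis i 1 :: complex^_) $ k) = 0" "\<And>l. Im ((axis j 1 :: complex^_) $ l) = 0"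
    by (simp_all add: axis_nth)
  then show ?thesis by (simp add: H_Z_GZ Im_prod3)
qed

lemma HZ_rel3:
  assumes Z: "Z \<in> siegel"
  shows "Im (H_Z Z (Z *v axis i 1) (Z *v axis j 1)) = 0"
proof -
  have "Im (H_Z Z (Z *v axis i 1) (Z *v axis j 1)) =
     (\<Sum>k\<in>UNIV. \<Sum>l\<in>UNIV. ImM Z $k$i * GZ Z $k$l * ReM Z $l$j) -
     (\<Sum>k\<in>UNIV. \<Sum>l\<in>UNIV. ReM Z $k$i * GZ Z $k$l * ImM Z $l$j)"
    by (simp add: H_Z_GZ mv_axis Im_prod3 ImM_def ReM_def algebra_simps sum_subtractf)
  also have "\<dots> = ((transpose (ImM Z) ** GZ Z) ** ReM Z) $ i $ j - ((transpose (ReM Z) ** GZ Z) ** ImM Z) $ i $ j"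
    by (simp only: trip)
  also have "\<dots> = ReM Z $ i $ j - ReM Z $ j $ i"
    by (simp add: ImM_sym[OF Z] siegel_inv[OF Z] transpose_entry flip: matrix_mul_assoc)
  also have "\<dots> = 0" using ReM_sym[OF Z] transpose_entry[of "ReM Z" i j] by simp
  finally show ?thesis .
qed

lemma Q_F:
  assumes Z: "Z \<in> siegel"
  shows "Im (H_Z Z (F_Z Z x y) (F_Z Z x' y')) = sform (x, y) (x', y')"
  unfolding F_Z_Bx
  by (rule Q_Bx[OF H_Z_sesq[OF Z]]) (simp_all add: HZ_rel1[OF Z] HZ_rel2 HZ_rel3[OF Z])


definition Fp :: "complex^'n^'n \<Rightarrow> ((real^'n) \<times> (real^'n)) \<Rightarrow> complex^'n" where
  "Fp Z p = F_Z Z (fst p) (snd p)"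

lemma cnjv_rv: "cnjv (rv x) = rv x" by (simp add: cnjv_def rv_def vec_eq_iff)
lemma cmat_rv: "cmat M *v rv x = rv (rmat M *v x)"
  by (simp add: cmat_def rmat_def rv_def matrix_vector_mult_def vec_eq_iff)
lemma rv_add: "rv (a + b) = rv a + rv b" by (simp add: rv_def vec_eq_iff)
lemma rv_diff: "rv (a - b) = rv a - rv b" by (simp add: rv_def vec_eq_iff)
lemma rv_neg: "rv (- a) = - rv a" by (simp add: rv_def vec_eq_iff)
lemma cnjM_siegel: "Z \<in> siegel \<Longrightarrow> transpose (cnjM Z) = cnjM Z"
  using cnjM_transpose[of Z] siegel_sym[of Z] by simp

lemma mv_add_l: "((A::'a::semiring_1^'n^'m) + B) *v x = A *v x + B *v x"
  by (simp add: matrix_vector_mult_add_rdistrib)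

lemma Kgamma: "sp_mult (btr (A,B,C,D)) bE = (- transpose A, transpose C, - transpose B, transpose D)"
  by (simp add: sp_mult_def btr_def bE_def mm_simps)

lemma kappa_coords:
  assumes Z: "Z \<in> siegel" and X: "real_ppav_level N (AZ N \<gamma> Z)" and act: "sp_act \<gamma> Z = tauZ Z"
  shows "kappa_Z \<gamma> Z (Fp Z p) = Fp Z (bact (sp_mult (btr \<gamma>) bE) p)"
proof -
  obtain A B C D where g: "\<gamma> = (A,B,C,D)" by (cases \<gamma>)
  define W where "W = cmat C ** Z + cmat D"
  define T where "T = transpose W"
  have kap: "\<And>M. kappa_Z \<gamma> Z M = T *v cnjv M" by (simp add: kappa_Z_def g T_def W_def)
  have ai: "antilinear_involution (kappa_Z \<gamma> Z)"
    using rpl_unfold[OF X] by (simp add: AZ_def)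
  then have inv: "\<And>M. T *v cnjv (T *v cnjv M) = M"
    unfolding antilinear_involution_def kap by blast
  have TT: "T ** cnjM T = mat 1"
  proof (rule iffD2[OF matrix_eq], rule allI)
    fix M show "(T ** cnjM T) *v M = mat 1 *v M"
      using inv[of M] by (simp add: cnjv_mult matrix_vector_mul_assoc)
  qed
  have TT2: "cnjM T ** T = mat 1" using arg_cong[OF TT, of cnjM] by (simp add: cnjM_mult)
  have WW: "W ** cnjM W = mat 1"
    using arg_cong[OF TT2, of transpose] by (simp add: matrix_transpose_mul T_def cnjM_transpose)
  have WW2: "cnjM W ** W = mat 1"
    using arg_cong[OF TT, of transpose] by (simp add: matrix_transpose_mul T_def cnjM_transpose)
  have minv: "matrix_inv W = cnjM W" by (rule matrix_inv_eq[OF WW WW2])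
  have "(cmat A ** Z + cmat B) ** cnjM W = - cnjM Z"
    using act by (simp add: sp_act_def g W_def[symmetric] minv tauZ_def)
  then have "(cmat A ** Z + cmat B) ** cnjM W ** W = - cnjM Z ** W" by simp
  then have AB: "cmat A ** Z + cmat B = - (cnjM Z ** W)"
    by (simp add: WW2 mm_neg_l flip: matrix_mul_assoc)
  have TZ: "T ** cnjM Z = - (Z ** cmat (transpose A) + cmat (transpose B))"
  proof -
    have "T ** cnjM Z = transpose (cnjM Z ** W)"
      by (simp add: T_def matrix_transpose_mul cnjM_siegel[OF Z])
    also have "\<dots> = transpose (- (cmat A ** Z + cmat B))" by (simp add: AB)
    also have "\<dots> = - (Z ** cmat (transpose A) + cmat (transpose B))"
      by (simp add: transpose_neg transpose_diff transpose_add matrix_transpose_mul siegel_sym[OF Z] cmat_transpose)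
    finally show ?thesis .
  qed
  have Tf: "T = Z ** cmat (transpose C) + cmat (transpose D)"
    by (simp add: T_def W_def transpose_add matrix_transpose_mul siegel_sym[OF Z] cmat_transpose)
  obtain x y where p: "p = (x, y)" by (cases p)
  have "kappa_Z \<gamma> Z (Fp Z p) = T *v (cnjM Z *v rv x + rv y)"
    by (simp add: kap Fp_def p F_Z_rv cnjv_add cnjv_mult cnjv_rv)
  also have "\<dots> = (T ** cnjM Z) *v rv x + T *v rv y"
    by (simp add: matrix_vector_right_distrib matrix_vector_mul_assoc)
  also have "\<dots> = (- (Z ** cmat (transpose A) + cmat (transpose B))) *v rv x +
       (Z ** cmat (transpose C) + cmat (transpose D)) *v rv y"
    by (simp only: TZ) (simp only: Tf)
  also have "\<dots> = Z *v rv (rmat (- transpose A) *v x + rmat (transpose C) *v y)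
                  + rv (rmat (- transpose B) *v x + rmat (transpose D) *v y)"
    by (simp add: mv_add_l mv_neg_l cmat_rv rv_add rv_diff rv_neg matrix_vector_right_distrib rmat_neg
        matrix_vector_mult_diff_distrib matrix_vector_mult_diff_rdistrib flip: matrix_vector_mul_assoc)
  also have "\<dots> = Fp Z (bact (sp_mult (btr \<gamma>) bE) p)"
    by (simp add: g Kgamma Fp_def F_Z_rv bact_def p)
  finally show ?thesis .
qed


lemma Fp_Bx: "Fp Z p = Bx (\<lambda>i. Z *v axis i 1) (\<lambda>i. axis i 1) p"
  by (cases p) (simp add: Fp_def F_Z_Bx)
lemma Fp_inj: assumes "Z \<in> siegel" "Fp Z p = Fp Z q" shows "p = q"
proof -
  have "fst p = fst q \<and> snd p = snd q"
    by (rule F_inj[OF assms(1)]) (use assms(2) in \<open>simp add: Fp_def\<close>)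
  then show ?thesis by (simp add: prod_eq_iff)
qed
lemma Fp_add: "Fp Z (p + q) = Fp Z p + Fp Z q" by (simp add: Fp_Bx Bx_add)
lemma Fp_diff: "Fp Z (p - q) = Fp Z p - Fp Z q" by (simp add: Fp_Bx Bx_diff)
lemma Fp_scale: "Fp Z (r *\<^sub>R p) = r *\<^sub>R Fp Z p" by (simp add: Fp_Bx Bx_scale)
lemma Fp_e1: "Fp Z (axis i 1, 0) = Z *v axis i 1" by (simp add: Fp_Bx Bx_axis1)
lemma Fp_e2: "Fp Z (0, axis i 1) = axis i 1" by (simp add: Fp_Bx Bx_axis2)


lemma LZ_ZZ: "L_Z Z = Fp Z ` ZZ"
proof -
  have e: "\<And>a b. F_Z Z (\<chi> i. of_int (a i)) (\<chi> i. of_int (b i)) = Fp Z (zv a, zv b)"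
    by (simp add: Fp_def zv_def)
  have "L_Z Z = {Fp Z (zv a, zv b) | a b. True}" unfolding L_Z_def e ..
  also have "\<dots> = Fp Z ` ZZ" unfolding ZZ_def by (auto simp: image_iff)
  finally show ?thesis .
qed

lemma ZZ_e1: "(axis i 1, 0) \<in> ZZ"
  unfolding ZZ_def
  by (rule CollectI, rule exI[of _ "\<lambda>j. if j = i then 1 else 0"], rule exI[of _ "\<lambda>_. 0"])
     (simp add: zv_def axis_def vec_eq_iff)
lemma ZZ_e2: "(0, axis i 1) \<in> ZZ"
  unfolding ZZ_def
  by (rule CollectI, rule exI[of _ "\<lambda>_. 0"], rule exI[of _ "\<lambda>j. if j = i then 1 else 0"])
     (simp add: zv_def axis_def vec_eq_iff)

lemma rmat_col: "rmat (\<chi> k i. a i k) *v axis i 1 = zv (a i)"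
  by (simp add: vec_eq_iff mv_axis rmat_def zv_def)


lemma iso_coords:
  assumes Z': "Z' \<in> siegel" and f: "rlin f" and L: "f ` L_Z Z \<subseteq> L_Z Z'"
  shows "\<exists>P. \<forall>p. f (Fp Z p) = Fp Z' (bact P p)"
proof -
  have "\<forall>i. \<exists>ab. f (Z *v axis i 1) = Fp Z' (zv (fst ab), zv (snd ab))"
  proof
    fix i
    have "f (Fp Z (axis i 1, 0)) \<in> L_Z Z'" using L ZZ_e1 LZ_ZZ by blast
    then obtain a b where "f (Z *v axis i 1) = Fp Z' (zv a, zv b)"
      unfolding LZ_ZZ ZZ_def Fp_e1 by auto
    then show "\<exists>ab. f (Z *v axis i 1) = Fp Z' (zv (fst ab), zv (snd ab))" by (intro exI[of _ "(a,b)"]) simp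
  qed
  from choice[OF this] obtain fu where fu: "\<And>i. f (Z *v axis i 1) = Fp Z' (zv (fst (fu i)), zv (snd (fu i)))" by blast
  have "\<forall>i. \<exists>ab. f (axis i 1) = Fp Z' (zv (fst ab), zv (snd ab))"
  proof
    fix i
    have "f (Fp Z (0, axis i 1)) \<in> L_Z Z'" using L ZZ_e2 LZ_ZZ by blast
    then obtain a b where "f (axis i 1) = Fp Z' (zv a, zv b)"
      unfolding LZ_ZZ ZZ_def Fp_e2 by auto
    then show "\<exists>ab. f (axis i 1) = Fp Z' (zv (fst ab), zv (snd ab))" by (intro exI[of _ "(a,b)"]) simp
  qed
  from choice[OF this] obtain fv where fv: "\<And>i. f (axis i 1) = Fp Z' (zv (fst (fv i)), zv (snd (fv i)))" by blast
  define P where "P = ((\<chi> k i. fst (fu i) k), (\<chi> k i. fst (fv i) k), (\<chi> k i. snd (fu i) k), (\<chi> k i. snd (fv i) k))"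
  have "\<forall>p. f (Fp Z p) = Fp Z' (bact P p)"
    unfolding Fp_Bx P_def
    by (intro allI map_coords[OF f]) (simp_all add: rmat_col fu[unfolded Fp_Bx] fv[unfolded Fp_Bx])
  then show ?thesis by blast
qed

lemma axis_scale: "axis i (c::real) = c *\<^sub>R axis i 1"
  by (simp add: axis_def vec_eq_iff)

lemma lvlU_AZ: "lvlU (AZ N g Z) i = (1 / real_of_int N) *\<^sub>R Fp Z (axis i 1, 0)"
  by (simp only: Fp_scale[symmetric]) (simp add: AZ_def Fp_def axis_scale[of i "1 / real_of_int N"])
lemma lvlV_AZ: "lvlV (AZ N g Z) i = (1 / real_of_int N) *\<^sub>R Fp Z (0, axis i 1)"
  by (simp only: Fp_scale[symmetric]) (simp add: AZ_def Fp_def axis_scale[of i "1 / real_of_int N"])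

lemma lvl_div:
  assumes Z: "Z \<in> siegel" and N: "N \<noteq> 0" and mem: "(1 / real_of_int N) *\<^sub>R Fp Z (zv a, zv b) \<in> L_Z Z"
  shows "N dvd a i" "N dvd b i"
proof -
  obtain q where q: "q \<in> ZZ" "(1 / real_of_int N) *\<^sub>R Fp Z (zv a, zv b) = Fp Z q"
    using mem unfolding LZ_ZZ by blast
  then have "Fp Z ((1 / real_of_int N) *\<^sub>R (zv a, zv b)) = Fp Z q" by (subst Fp_scale)
  then have "(1 / real_of_int N) *\<^sub>R (zv a, zv b) = q" by (rule Fp_inj[OF Z])
  moreover obtain a' b' where "q = (zv a', zv b')" using q(1) unfolding ZZ_def by auto
  ultimately have "(1 / real_of_int N) *\<^sub>R zv a = zv a'" "(1 / real_of_int N) *\<^sub>R zv b = zv b'" by auto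
  then show "N dvd a i" "N dvd b i" using zv_div N by blast+
qed

lemma bact_e1: "bact (P11, P12, P21, P22) (axis i 1, 0) = (zv (\<lambda>k. P11$k$i), zv (\<lambda>k. P21$k$i))"
  by (simp add: bact_def vec_eq_iff mv_axis rmat_def zv_def)
lemma bact_e2: "bact (P11, P12, P21, P22) (0, axis i 1) = (zv (\<lambda>k. P12$k$i), zv (\<lambda>k. P22$k$i))"
  by (simp add: bact_def vec_eq_iff mv_axis rmat_def zv_def)
lemma axis_zv: "axis i 1 = zv (\<lambda>k. (mat 1 :: int^'n^'n) $ k $ i)"
  by (simp add: axis_def zv_def mat_def vec_eq_iff)
lemma zero_zv: "0 = zv (\<lambda>k. 0)" by (simp add: zv_def vec_eq_iff)
lemma zv_diff: "zv a - zv b = zv (\<lambda>k. a k - b k)" by (simp add: zv_def vec_eq_iff)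


lemma rlin_scale: "rlin f \<Longrightarrow> f (r *\<^sub>R x) = r *\<^sub>R f x" by (simp add: rlin_def)

lemma mat1_sym: "(mat 1 :: int^'n^'n) $ i $ j = mat 1 $ j $ i" by (simp add: mat_def)

lemma level_col_U:
  assumes Z': "Z' \<in> siegel" and N: "N \<noteq> 0" and f: "rlin f"
    and P: "\<And>p. f (Fp Z p) = Fp Z' (bact (P11,P12,P21,P22) p)"
    and lv: "f (lvlU (AZ N g Z) i) - lvlU (AZ N g' Z') i \<in> L_Z Z'"
  shows "N dvd (P11$k$i - (mat 1 :: int^'n^'n)$k$i)" "N dvd P21$k$i"
proof -
  have 1: "f (lvlU (AZ N g Z) i) - lvlU (AZ N g' Z') i
      = (1 / real_of_int N) *\<^sub>R (Fp Z' (zv (\<lambda>k. P11$k$i), zv (\<lambda>k. P21$k$i)) - Fp Z' (axis i 1, 0))"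
    by (simp add: lvlU_AZ rlin_scale[OF f] P bact_e1 scaleR_diff_right)
  have 2: "(zv (\<lambda>k. P11$k$i), zv (\<lambda>k. P21$k$i)) - (axis i 1, 0) = (zv (\<lambda>k. P11$k$i - (mat 1 :: int^'n^'n)$k$i), zv (\<lambda>k. P21$k$i))"
    by (simp add: axis_zv zv_diff)
  have 3: "Fp Z' (zv (\<lambda>k. P11$k$i), zv (\<lambda>k. P21$k$i)) - Fp Z' (axis i 1, 0) = Fp Z' (zv (\<lambda>k. P11$k$i - (mat 1 :: int^'n^'n)$k$i), zv (\<lambda>k. P21$k$i))"
    by (simp only: Fp_diff[symmetric] 2)
  have "(1 / real_of_int N) *\<^sub>R Fp Z' (zv (\<lambda>k. P11$k$i - (mat 1 :: int^'n^'n)$k$i), zv (\<lambda>k. P21$k$i)) \<in> L_Z Z'"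
    using lv unfolding 1 3 .
  from lvl_div[OF Z' N this] show "N dvd (P11$k$i - (mat 1 :: int^'n^'n)$k$i)" "N dvd P21$k$i" by simp_all
qed

lemma level_col_V:
  assumes Z': "Z' \<in> siegel" and N: "N \<noteq> 0" and f: "rlin f"
    and P: "\<And>p. f (Fp Z p) = Fp Z' (bact (P11,P12,P21,P22) p)"
    and lv: "f (lvlV (AZ N g Z) i) - lvlV (AZ N g' Z') i \<in> L_Z Z'"
  shows "N dvd P12$k$i" "N dvd (P22$k$i - (mat 1 :: int^'n^'n)$k$i)"
proof -
  have 1: "f (lvlV (AZ N g Z) i) - lvlV (AZ N g' Z') i
      = (1 / real_of_int N) *\<^sub>R (Fp Z' (zv (\<lambda>k. P12$k$i), zv (\<lambda>k. P22$k$i)) - Fp Z' (0, axis i 1))"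
    by (simp add: lvlV_AZ rlin_scale[OF f] P bact_e2 scaleR_diff_right)
  have 2: "(zv (\<lambda>k. P12$k$i), zv (\<lambda>k. P22$k$i)) - (0, axis i 1) = (zv (\<lambda>k. P12$k$i), zv (\<lambda>k. P22$k$i - (mat 1 :: int^'n^'n)$k$i))"
    by (simp add: axis_zv zv_diff)
  have 3: "Fp Z' (zv (\<lambda>k. P12$k$i), zv (\<lambda>k. P22$k$i)) - Fp Z' (0, axis i 1) = Fp Z' (zv (\<lambda>k. P12$k$i), zv (\<lambda>k. P22$k$i - (mat 1 :: int^'n^'n)$k$i))"
    by (simp only: Fp_diff[symmetric] 2)
  have "(1 / real_of_int N) *\<^sub>R Fp Z' (zv (\<lambda>k. P12$k$i), zv (\<lambda>k. P22$k$i - (mat 1 :: int^'n^'n)$k$i)) \<in> L_Z Z'"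
    using lv unfolding 1 3 .
  from lvl_div[OF Z' N this] show "N dvd P12$k$i" "N dvd (P22$k$i - (mat 1 :: int^'n^'n)$k$i)" by simp_all
qed

lemma relation_from_kappa:
  assumes e: "sp_mult P (sp_mult (btr \<gamma>) bE) = sp_mult (sp_mult (btr \<gamma>') bE) P"
  shows "sp_mult (tilde (btr P)) \<gamma>' = sp_mult \<gamma> (btr P)"
proof -
  have "btr (sp_mult P (sp_mult (btr \<gamma>) bE)) = btr (sp_mult (sp_mult (btr \<gamma>') bE) P)" using e by simp
  then have e2: "sp_mult (sp_mult bE \<gamma>) (btr P) = sp_mult (btr P) (sp_mult bE \<gamma>')"
    by (simp add: btr_mult btr_bE)
  have "sp_mult \<gamma> (btr P) = sp_mult bE (sp_mult (sp_mult bE \<gamma>) (btr P))"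
    by (simp add: sp_mult_assoc[symmetric] bEE)
  also have "\<dots> = sp_mult bE (sp_mult (btr P) (sp_mult bE \<gamma>'))" using e2 by simp
  also have "\<dots> = sp_mult (tilde (btr P)) \<gamma>'" by (simp add: tilde_bE sp_mult_assoc)
  finally show ?thesis by simp
qed


lemma part2_core:
  assumes Z: "Z \<in> siegel" and Z': "Z' \<in> siegel" and N: "N \<noteq> 0"
    and XZ: "real_ppav_level N (AZ N \<gamma> Z)" and XZ': "real_ppav_level N (AZ N \<gamma>' Z')"
    and act: "sp_act \<gamma> Z = tauZ Z" and act': "sp_act \<gamma>' Z' = tauZ Z'"
    and iso: "rppav_iso (AZ N \<gamma> Z) (AZ N \<gamma>' Z') f"
  shows "cohomologous N \<gamma> \<gamma>'"
proof -
  note I = iso_unfold[OF iso]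
  have cf: "clin f" using I(1) .
  have rf: "rlin f" using clin_rlin'[OF cf] .
  have latf: "f ` L_Z Z = L_Z Z'" using I(3) by (simp add: AZ_def)
  obtain P where P: "\<And>p. f (Fp Z p) = Fp Z' (bact P p)"
    using iso_coords[OF Z' rf] latf by blast
  have iso': "rppav_iso (AZ N \<gamma>' Z') (AZ N \<gamma> Z) (inv f)" by (rule iso_inv[OF iso XZ])
  note I' = iso_unfold[OF iso']
  have rf': "rlin (inv f)" using clin_rlin'[OF I'(1)] .
  have latf': "inv f ` L_Z Z' = L_Z Z" using I'(3) by (simp add: AZ_def)
  obtain P' where P': "\<And>p. inv f (Fp Z' p) = Fp Z (bact P' p)"
    using iso_coords[OF Z rf'] latf' by blast
  have fi: "\<And>x. f (inv f x) = x" using I(2) by (simp add: bij_is_surj surj_f_inv_f)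
  have PP': "sp_mult P P' = bI"
  proof (rule bact_inj)
    fix p
    have "Fp Z' (bact (sp_mult P P') p) = Fp Z' p"
      by (simp add: bact_mult P[symmetric] P'[symmetric] fi)
    then show "bact (sp_mult P P') p = bact bI p" using Fp_inj[OF Z'] by simp
  qed
  have hZ: "\<And>a b. H_Z Z' (f a) (f b) = H_Z Z a b" using I(4) by (simp add: AZ_def)
  have sP: "\<And>p q. sform (bact P p) (bact P q) = sform p q"
  proof -
    fix p q :: "(real^'a) \<times> (real^'a)"
    have "sform (bact P p) (bact P q) = Im (H_Z Z' (Fp Z' (bact P p)) (Fp Z' (bact P q)))"
      by (cases "bact P p"; cases "bact P q") (simp add: Fp_def Q_F[OF Z'])
    also have "\<dots> = Im (H_Z Z (Fp Z p) (Fp Z q))" by (simp add: P[symmetric] hZ)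
    also have "\<dots> = sform p q" by (cases p; cases q) (simp add: Fp_def Q_F[OF Z])
    finally show "sform (bact P p) (bact P q) = sform p q" .
  qed
  have sympP: "sp_mult (btr P) (sp_mult bJ P) = bJ" by (rule sform_pres[OF sP])
  have sympg: "sp_mult P (sp_mult bJ (btr P)) = bJ" by (rule sympl_transpose[OF sympP PP'])
  define g where "g = btr P"
  have sg: "symplectic_int g" unfolding symplectic_int_iff g_def using sympg by simp
  have kapZ: "\<And>a. f (kappa_Z \<gamma> Z a) = kappa_Z \<gamma>' Z' (f a)" using I(5) by (simp add: AZ_def)
  have kP: "sp_mult P (sp_mult (btr \<gamma>) bE) = sp_mult (sp_mult (btr \<gamma>') bE) P"
  proof (rule bact_inj)
    fix p
    have "Fp Z' (bact (sp_mult P (sp_mult (btr \<gamma>) bE)) p) = f (kappa_Z \<gamma> Z (Fp Z p))"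
      by (simp add: bact_mult P kappa_coords[OF Z XZ act])
    also have "\<dots> = kappa_Z \<gamma>' Z' (Fp Z' (bact P p))" by (simp add: kapZ P)
    also have "\<dots> = Fp Z' (bact (sp_mult (sp_mult (btr \<gamma>') bE) P) p)"
      by (simp add: bact_mult kappa_coords[OF Z' XZ' act'])
    finally show "bact (sp_mult P (sp_mult (btr \<gamma>) bE)) p = bact (sp_mult (sp_mult (btr \<gamma>') bE) P) p"
      using Fp_inj[OF Z'] by blast
  qed
  have rel: "sp_mult (tilde g) \<gamma>' = sp_mult \<gamma> g" unfolding g_def by (rule relation_from_kappa[OF kP])
  obtain P11 P12 P21 P22 where Pd: "P = (P11, P12, P21, P22)" by (cases P)
  have lU: "\<And>i. f (lvlU (AZ N \<gamma> Z) i) - lvlU (AZ N \<gamma>' Z') i \<in> L_Z Z'"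
    using I(6) by (simp add: AZ_def)
  have lV: "\<And>i. f (lvlV (AZ N \<gamma> Z) i) - lvlV (AZ N \<gamma>' Z') i \<in> L_Z Z'"
    using I(7) by (simp add: AZ_def)
  have d1: "\<And>k i. N dvd (P11$k$i - (mat 1 :: int^'a^'a)$k$i)" "\<And>k i. N dvd P21$k$i"
    using level_col_U[OF Z' N rf P[unfolded Pd] lU] by blast+
  have d2: "\<And>k i. N dvd P12$k$i" "\<And>k i. N dvd (P22$k$i - (mat 1 :: int^'a^'a)$k$i)"
    using level_col_V[OF Z' N rf P[unfolded Pd] lV] by blast+
  have d1s: "\<And>k i. N dvd (P11$k$i - (mat 1 :: int^'a^'a)$i$k)" using d1(1) mat1_sym by metis
  have d2s: "\<And>k i. N dvd (P22$k$i - (mat 1 :: int^'a^'a)$i$k)" using d2(2) mat1_sym by metis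
  have gG: "g \<in> Gamma N"
    unfolding Gamma_def g_def Pd btr_def
    using sg d1 d2 d1s d2s by (auto simp: g_def Pd btr_def transpose_entry)
  show ?thesis unfolding cohomologous_def using gG rel by blast
qed


lemma part2:
  fixes N m :: int
  assumes m: "m \<ge> 1" "N = 4 * m"
    and X: "real_ppav_level N X" and X': "real_ppav_level N X'"
    and psi: "rppav_iso X X' \<psi>"
    and Z: "Z \<in> siegel" and act: "sp_act \<gamma> Z = tauZ Z" and phi: "rppav_iso (AZ N \<gamma> Z) X \<phi>"
    and Z': "Z' \<in> siegel" and act': "sp_act \<gamma>' Z' = tauZ Z'" and phi': "rppav_iso (AZ N \<gamma>' Z') X' \<phi>'"
  shows "cohomologous N \<gamma> \<gamma>'"
proof -
  have N: "N \<noteq> 0" using m by simp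
  have XZ: "real_ppav_level N (AZ N \<gamma> Z)" by (rule transport[OF phi X])
  have XZ': "real_ppav_level N (AZ N \<gamma>' Z')" by (rule transport[OF phi' X'])
  have c1: "rppav_iso (AZ N \<gamma> Z) X' (\<psi> \<circ> \<phi>)" by (rule iso_comp[OF phi psi X'])
  have c2: "rppav_iso X' (AZ N \<gamma>' Z') (inv \<phi>')" by (rule iso_inv[OF phi' XZ'])
  have c3: "rppav_iso (AZ N \<gamma> Z) (AZ N \<gamma>' Z') (inv \<phi>' \<circ> (\<psi> \<circ> \<phi>))" by (rule iso_comp[OF c1 c2 XZ'])
  show ?thesis by (rule part2_core[OF Z Z' N XZ XZ' act act' c3])
qed

lemma bx_coords:
  assumes f: "rlin f" and sb: "symplectic_basis L Q u v" and L: "f ` L \<subseteq> L"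
  shows "\<exists>P. \<forall>p. f (Bx u v p) = Bx u v (bact P p)"
proof -
  have "\<forall>i. \<exists>ab. f (u i) = Bx u v (zv (fst ab), zv (snd ab))"
  proof
    fix i
    have "f (u i) \<in> Bx u v ` ZZ" using L sb_u[OF sb] sb_L[OF sb] by blast
    then obtain a b where "f (u i) = Bx u v (zv a, zv b)" unfolding ZZ_def by auto
    then show "\<exists>ab. f (u i) = Bx u v (zv (fst ab), zv (snd ab))" by (intro exI[of _ "(a,b)"]) simp
  qed
  from choice[OF this] obtain fu where fu: "\<And>i. f (u i) = Bx u v (zv (fst (fu i)), zv (snd (fu i)))" by blast
  have "\<forall>i. \<exists>ab. f (v i) = Bx u v (zv (fst ab), zv (snd ab))"
  proof
    fix i
    have "f (v i) \<in> Bx u v ` ZZ" using L sb_v[OF sb] sb_L[OF sb] by blast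
    then obtain a b where "f (v i) = Bx u v (zv a, zv b)" unfolding ZZ_def by auto
    then show "\<exists>ab. f (v i) = Bx u v (zv (fst ab), zv (snd ab))" by (intro exI[of _ "(a,b)"]) simp
  qed
  from choice[OF this] obtain fv where fv: "\<And>i. f (v i) = Bx u v (zv (fst (fv i)), zv (snd (fv i)))" by blast
  define P where "P = ((\<chi> k i. fst (fu i) k), (\<chi> k i. fst (fv i) k), (\<chi> k i. snd (fu i) k), (\<chi> k i. snd (fv i) k))"
  have "\<forall>p. f (Bx u v p) = Bx u v (bact P p)"
    unfolding P_def
    by (intro allI map_coords[OF f]) (simp_all add: rmat_col fu fv)
  then show ?thesis by blast
qed

lemma antilin_ext:
  fixes f g :: "complex^'n \<Rightarrow> complex^'n"
  assumes "\<And>x y. f (x + y) = f x + f y" "\<And>c x. f (c *s x) = cnj c *s f x"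
    "\<And>x y. g (x + y) = g x + g y" "\<And>c x. g (c *s x) = cnj c *s g x"
    "\<And>j. f (axis j 1) = g (axis j 1)"
  shows "f x = g x"
proof -
  have f0: "f 0 = 0" using assms(1)[of 0 0] by simp
  have g0: "g 0 = 0" using assms(3)[of 0 0] by simp
  have fs: "\<And>S h. finite S \<Longrightarrow> f (\<Sum>i\<in>S. h i) = (\<Sum>i\<in>S. f (h i))"
    subgoal for S h by (induction S rule: finite_induct) (simp_all add: f0 assms(1))
    done
  have gs: "\<And>S h. finite S \<Longrightarrow> g (\<Sum>i\<in>S. h i) = (\<Sum>i\<in>S. g (h i))"
    subgoal for S h by (induction S rule: finite_induct) (simp_all add: g0 assms(3))
    done
  have "x = (\<Sum>i\<in>UNIV. (x$i) *s axis i 1)" by (rule basis_expansion[symmetric])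
  then have "f x = (\<Sum>i\<in>UNIV. cnj (x$i) *s f (axis i 1))" "g x = (\<Sum>i\<in>UNIV. cnj (x$i) *s g (axis i 1))"
    by (metis (no_types, lifting) fs gs assms(2,4) finite sum.cong)+
  then show ?thesis using assms(5) by simp
qed

lemma mat_eq_cols:
  assumes "\<And>i. (A::'a::semiring_1^'n^'m) *v axis i 1 = B *v axis i 1" shows "A = B"
  using assms by (simp add: vec_eq_iff mv_axis)

lemma bEJE: "sp_mult bE (sp_mult bJ bE) = bneg bJ"
  by (simp add: sp_mult_def bE_def bJ_def bneg_def mm_simps)


definition Vm :: "('n::finite \<Rightarrow> complex^'n) \<Rightarrow> complex^'n^'n" where
  "Vm v = (\<chi> r j. v j $ r)"

definition Gm :: "(complex^'n \<Rightarrow> complex^'n \<Rightarrow> complex) \<Rightarrow> ('n::finite \<Rightarrow> complex^'n) \<Rightarrow> real^'n^'n" where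
  "Gm H v = (\<chi> j k. Re (H (v j) (v k)))"

lemma Vm_mult: "Vm v *v M = (\<Sum>j\<in>UNIV. M$j *s v j)"
  by (simp add: Vm_def matrix_vector_mult_def vec_eq_iff sum_component mult.commute)

lemma Vm_axis: "Vm v *v axis j 1 = v j"
  by (simp add: Vm_def vec_eq_iff mv_axis)

lemma Vm_rv: "Vm v *v rv c = Bx u v (0, c)"
  by (simp add: Vm_mult Bx_def rv_nth scaleR_cvec)

lemma sb_rels:
  assumes "symplectic_basis L (\<lambda>a b. Im (H a b)) u v"
  shows "\<And>i j. Im (H (u i) (v j)) = (if i = j then 1 else 0)"
    "\<And>i j. Im (H (u i) (u j)) = 0" "\<And>i j. Im (H (v i) (v j)) = 0"
  using assms unfolding symplectic_basis_def by blast+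

lemma Gm_entry:
  assumes sb: "symplectic_basis L (\<lambda>a b. Im (H a b)) u v"
  shows "H (v j) (v k) = complex_of_real (Gm H v $ j $ k)"
  using sb_rels(3)[OF sb, of j k] by (simp add: Gm_def complex_eq_iff)

lemma H_Vm:
  assumes H: "sesq H" and sb: "symplectic_basis L (\<lambda>a b. Im (H a b)) u v"
  shows "H (Vm v *v M) (Vm v *v M') = (\<Sum>j\<in>UNIV. \<Sum>k\<in>UNIV. M$j * complex_of_real (Gm H v $ j $ k) * cnj (M'$k))"
  unfolding Vm_mult
  by (simp add: sesq_sum_l[OF H] sesq_sum_r[OF H] sesq_smult_l[OF H] sesq_smult_r[OF H]
      Gm_entry[OF sb] sum_distrib_left mult_ac) (rule sum.swap)

lemma Gm_sym:
  assumes H: "sesq H" shows "Gm H v $ j $ k = Gm H v $ k $ j"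
  using sesq_sym[OF H, of "v j" "v k"] by (simp add: Gm_def)

lemma Re_prod3: "Re (a * complex_of_real g * cnj b) = g * (Re a * Re b + Im a * Im b)"
  by (simp add: algebra_simps)

lemma Gm_pos:
  assumes pdh: "pos_def_hermitian H" and sb: "symplectic_basis L (\<lambda>a b. Im (H a b)) u v"
    and c: "c \<noteq> 0"
  shows "c \<bullet> (Gm H v *v c) > 0"
proof -
  have H: "sesq H" using pdh_sesq[OF pdh] .
  have "Bx u v (0, c) \<noteq> 0"
  proof
    assume "Bx u v (0, c) = 0"
    then have "Bx u v (0, c) = Bx u v 0" by simp
    then have "(0::real^'a, c) = 0" by (rule sb_inj[OF sb])
    then show False using c by (simp add: zero_prod_def)
  qed
  then have "Re (H (Bx u v (0, c)) (Bx u v (0, c))) > 0"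
    using pdh unfolding pos_def_hermitian_def by blast
  then have "Re (H (Vm v *v rv c) (Vm v *v rv c)) > 0" using Vm_rv[of v c u] by simp
  then have "(\<Sum>j\<in>UNIV. \<Sum>k\<in>UNIV. Gm H v $ j $ k * (c$j * c$k)) > 0"
    by (simp add: H_Vm[OF H sb] Re_prod3 rv_nth mult_ac)
  moreover have "c \<bullet> (Gm H v *v c) = (\<Sum>j\<in>UNIV. \<Sum>k\<in>UNIV. Gm H v $ j $ k * (c$j * c$k))"
    by (simp add: inner_vec_def matrix_vector_mult_def sum_distrib_left mult_ac)
  ultimately show ?thesis by simp
qed

lemma Gm_nonneg:
  assumes pdh: "pos_def_hermitian H" and sb: "symplectic_basis L (\<lambda>a b. Im (H a b)) u v"
  shows "c \<bullet> (Gm H v *v c) \<ge> 0"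
  using Gm_pos[OF pdh sb, of c] by (cases "c = 0") auto

lemma Vm_inj:
  assumes pdh: "pos_def_hermitian H" and sb: "symplectic_basis L (\<lambda>a b. Im (H a b)) u v"
    and M: "Vm v *v M = 0"
  shows "M = 0"
proof -
  have H: "sesq H" using pdh_sesq[OF pdh] .
  define a where "a = (\<chi> j. Re (M$j))"
  define b where "b = (\<chi> j. Im (M$j))"
  have "Re (H (Vm v *v M) (Vm v *v M)) = 0" using M by (simp add: sesq_zero_l[OF H])
  moreover have "Re (H (Vm v *v M) (Vm v *v M)) = (\<Sum>j\<in>UNIV. \<Sum>k\<in>UNIV. Re (M$j * complex_of_real (Gm H v $ j $ k) * cnj (M$k)))"
    by (simp add: H_Vm[OF H sb])
  moreover have "(\<Sum>j\<in>UNIV. \<Sum>k\<in>UNIV. Re (M$j * complex_of_real (Gm H v $ j $ k) * cnj (M$k)))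
     = a \<bullet> (Gm H v *v a) + b \<bullet> (Gm H v *v b)"
    by (simp add: Re_prod3 a_def b_def inner_vec_def matrix_vector_mult_def sum_distrib_left
        distrib_left sum.distrib algebra_simps)
  ultimately have s: "a \<bullet> (Gm H v *v a) + b \<bullet> (Gm H v *v b) = 0" by simp
  have "a = 0"
  proof (rule ccontr)
    assume "a \<noteq> 0"
    then have "a \<bullet> (Gm H v *v a) > 0" by (rule Gm_pos[OF pdh sb])
    then show False using s Gm_nonneg[OF pdh sb, of b] by simp
  qed
  moreover have "b = 0"
  proof (rule ccontr)
    assume "b \<noteq> 0"
    then have "b \<bullet> (Gm H v *v b) > 0" by (rule Gm_pos[OF pdh sb])
    then show False using s Gm_nonneg[OF pdh sb, of a] by simp
  qed
  ultimately show "M = 0" by (simp add: a_def b_def vec_eq_iff complex_eq_iff)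
qed

lemma Vm_bij:
  assumes pdh: "pos_def_hermitian H" and sb: "symplectic_basis L (\<lambda>a b. Im (H a b)) u v"
  shows "bij (\<lambda>M. Vm v *v M)"
proof -
  have inj: "inj (\<lambda>M. Vm v *v M)"
  proof (rule injI)
    fix M M' assume "Vm v *v M = Vm v *v M'"
    then have "Vm v *v (M - M') = 0" by (simp add: matrix_vector_mult_diff_distrib)
    then have "M - M' = 0" by (rule Vm_inj[OF pdh sb])
    then show "M = M'" by simp
  qed
  have "surj (\<lambda>M. Vm v *v M)"
    by (rule linear_injective_imp_surjective[OF _ inj]) simp_all
  then show ?thesis using inj by (simp add: bij_def)
qed


lemma rlin_mv: "rlin (\<lambda>M. (A::complex^'n^'n) *v M)"
  using matrix_vector_mul_linear[of A] by (simp add: rlin_def linear_add linear_scale)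
lemma clin_mv: "clin (\<lambda>M. (A::complex^'n^'n) *v M)"
  by (simp add: clin_def matrix_vector_right_distrib)
    (simp add: matrix_vector_mult_def vec_eq_iff sum_distrib_left mult_ac)

lemma H_Vm_cols:
  assumes H: "sesq H" and sb: "symplectic_basis L (\<lambda>a b. Im (H a b)) u v"
  shows "H (Vm v *v x) (v k) = (\<Sum>j\<in>UNIV. x$j * complex_of_real (Gm H v $ j $ k))"
proof -
  have "H (Vm v *v x) (v k) = H (Vm v *v x) (Vm v *v axis k 1)" by (simp add: Vm_axis)
  also have "\<dots> = (\<Sum>j\<in>UNIV. \<Sum>l\<in>UNIV. x$j * complex_of_real (Gm H v $ j $ l) * cnj ((axis k 1 :: complex^_) $ l))"
    by (rule H_Vm[OF H sb])
  also have "\<dots> = (\<Sum>j\<in>UNIV. x$j * complex_of_real (Gm H v $ j $ k))"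
  proof (rule sum.cong[OF refl])
    fix j
    have "(\<Sum>l\<in>UNIV. x$j * complex_of_real (Gm H v $ j $ l) * cnj ((axis k 1 :: complex^_) $ l))
        = (\<Sum>l\<in>UNIV. if l = k then x$j * complex_of_real (Gm H v $ j $ l) else 0)"
      by (rule sum.cong) (auto simp: axis_nth)
    then show "(\<Sum>l\<in>UNIV. x$j * complex_of_real (Gm H v $ j $ l) * cnj ((axis k 1 :: complex^_) $ l))
        = x$j * complex_of_real (Gm H v $ j $ k)" by simp
  qed
  finally show ?thesis .
qed

lemma construct_Z:
  assumes pdh: "pos_def_hermitian H" and sb: "symplectic_basis L (\<lambda>a b. Im (H a b)) u v"
  obtains Z where "Z \<in> siegel" "\<And>i. Vm v *v (Z *v axis i 1) = u i" "GZ Z = Gm H v"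
proof -
  have H: "sesq H" using pdh_sesq[OF pdh] .
  have surj: "surj (\<lambda>M. Vm v *v M)" using Vm_bij[OF pdh sb] by (simp add: bij_def)
  have "\<forall>i. \<exists>z. Vm v *v z = u i" using surj by (metis surjD)
  from choice[OF this] obtain zf where zf: "\<And>i. Vm v *v zf i = u i" by blast
  define Z where "Z = (\<chi> k i. zf i $ k)"
  have Zc: "\<And>i. Z *v axis i 1 = zf i" by (simp add: Z_def vec_eq_iff mv_axis)
  have ZU: "\<And>i. Vm v *v (Z *v axis i 1) = u i" by (simp add: Zc zf)
  define G where "G = Gm H v"
  define Y where "Y = ImM Z"
  define Xr where "Xr = ReM Z"
  have Gs: "transpose G = G" by (simp add: G_def transpose_def vec_eq_iff Gm_sym[OF H])
  have YG: "transpose Y ** G = mat 1"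
  proof -
    have "\<And>i k. (transpose Y ** G) $ i $ k = Im (H (u i) (v k))"
    proof -
      fix i k
      have "Im (H (u i) (v k)) = Im (\<Sum>j\<in>UNIV. Z $ j $ i * complex_of_real (G $ j $ k))"
        by (simp add: ZU[symmetric] H_Vm_cols[OF H sb] mv_axis G_def)
      also have "\<dots> = (transpose Y ** G) $ i $ k"
        by (simp add: matrix_matrix_mult_def transpose_def Y_def ImM_def)
      finally show "(transpose Y ** G) $ i $ k = Im (H (u i) (v k))" by simp
    qed
    then show ?thesis by (simp add: vec_eq_iff sb_rels(1)[OF sb] mat_def)
  qed
  have GY': "G ** transpose Y = mat 1" using YG matrix_left_right_inverse by blast
  have YG2: "Y ** G = mat 1"
    using arg_cong[OF GY', of transpose] by (simp add: matrix_transpose_mul Gs)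
  have GY: "G ** Y = mat 1" using YG2 matrix_left_right_inverse by blast
  have Ys: "transpose Y = Y"
  proof -
    have "transpose Y = transpose Y ** (G ** Y)" by (simp add: GY)
    also have "\<dots> = Y" by (simp add: matrix_mul_assoc YG)
    finally show ?thesis .
  qed
  have Xs: "transpose Xr = Xr"
  proof -
    have "\<And>i k. Im (H (u i) (u k)) = Xr $ i $ k - Xr $ k $ i"
    proof -
      fix i k
      have "Im (H (u i) (u k)) = Im (\<Sum>j\<in>UNIV. \<Sum>l\<in>UNIV. Z$j$i * complex_of_real (G $ j $ l) * cnj (Z$l$k))"
        by (simp add: ZU[symmetric] H_Vm[OF H sb] mv_axis G_def)
      also have "\<dots> = (\<Sum>j\<in>UNIV. \<Sum>l\<in>UNIV. Y$j$i * G$j$l * Xr$l$k) - (\<Sum>j\<in>UNIV. \<Sum>l\<in>UNIV. Xr$j$i * G$j$l * Y$l$k)"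
        by (simp add: Im_prod3 Y_def Xr_def ImM_def ReM_def algebra_simps sum_subtractf)
      also have "\<dots> = ((transpose Y ** G) ** Xr) $ i $ k - ((transpose Xr ** G) ** Y) $ i $ k"
        by (simp only: trip)
      also have "\<dots> = Xr $ i $ k - Xr $ k $ i"
        by (simp add: YG GY transpose_entry flip: matrix_mul_assoc)
      finally show "Im (H (u i) (u k)) = Xr $ i $ k - Xr $ k $ i" .
    qed
    then have "\<And>i k. Xr $ i $ k = Xr $ k $ i" using sb_rels(2)[OF sb] by fastforce
    then show ?thesis by (simp add: vec_eq_iff transpose_entry)
  qed
  have Zs: "transpose Z = Z"
  proof -
    have "\<And>i k. Z $ k $ i = Z $ i $ k"
    proof -
      fix i k
      have "Y $ k $ i = Y $ i $ k" "Xr $ k $ i = Xr $ i $ k"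
        using Ys Xs transpose_entry by metis+
      then show "Z $ k $ i = Z $ i $ k" by (simp add: Y_def Xr_def ImM_def ReM_def complex_eq_iff)
    qed
    then show ?thesis by (simp add: vec_eq_iff transpose_entry)
  qed
  have pd: "posdef_real Y"
    unfolding posdef_real_def
  proof (intro allI impI)
    fix x :: "real^'a" assume x: "x \<noteq> 0"
    have Gc: "G *v (Y *v x) = x" by (simp add: matrix_vector_mul_assoc GY)
    then have "Y *v x \<noteq> 0" using x by auto
    then have "(Y *v x) \<bullet> (G *v (Y *v x)) > 0" unfolding G_def by (rule Gm_pos[OF pdh sb])
    then show "x \<bullet> (Y *v x) > 0" by (simp add: Gc inner_commute)
  qed
  have Zsg: "Z \<in> siegel" using Zs pd by (simp add: siegel_def Y_def)
  have "GZ Z = G" unfolding GZ_def Y_def[symmetric] by (rule matrix_inv_eq[OF YG2 GY])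
  then show ?thesis using that Zsg ZU G_def by blast
qed


lemma bE_btrK: "sp_mult bE (btr (K11,K12,K21,K22)) = (- transpose K11, - transpose K21, transpose K12, transpose K22)"
  by (simp add: sp_mult_def bE_def btr_def mm_simps)

lemma axis_rv: "(axis j 1 :: complex^'n) = rv (axis j 1)"
  by (simp add: rv_def axis_def vec_eq_iff)

lemma cnjv_axis: "cnjv (axis j 1 :: complex^'n) = axis j 1"
  by (simp add: cnjv_def axis_def vec_eq_iff)

lemma kappa_lin:
  "kappa_Z g Z (x + y) = kappa_Z g Z x + kappa_Z g Z y"
  "kappa_Z g Z (c *s x) = cnj c *s kappa_Z g Z x"
proof -
  obtain A B C D where g: "g = (A,B,C,D)" by (cases g)
  show "kappa_Z g Z (x + y) = kappa_Z g Z x + kappa_Z g Z y"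
    by (simp add: kappa_Z_def g cnjv_add matrix_vector_right_distrib)
  show "kappa_Z g Z (c *s x) = cnj c *s kappa_Z g Z x"
    using clin_smult[OF clin_mv] by (simp add: kappa_Z_def g cnjv_smult del: transpose_matrix_vector)
qed

lemma part1:
  fixes N :: int and X :: "('n::finite) rppav"
  assumes N: "N \<noteq> 0" and X: "real_ppav_level N X"
  shows "\<exists>Z \<gamma> \<phi>. Z \<in> siegel \<and> \<gamma> \<in> Gamma N \<and> sp_act \<gamma> Z = tauZ Z \<and>
          real_ppav_level N (AZ N \<gamma> Z) \<and> rppav_iso (AZ N \<gamma> Z) X \<phi>"
proof -
  obtain u v where
    pdh: "pos_def_hermitian (herm X)" and ai: "antilinear_involution (kap X)"
    and kL: "kap X ` lat X = lat X" and Qa: "\<And>a b. Im (herm X (kap X a) (kap X b)) = - Im (herm X a b)"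
    and sb: "symplectic_basis (lat X) (\<lambda>a b. Im (herm X a b)) u v"
    and lU: "\<And>i. lvlU X i - (1 / of_int N) *s u i \<in> lat X"
    and lV: "\<And>i. lvlV X i - (1 / of_int N) *s v i \<in> lat X"
    and kU: "\<And>i. kap X ((1 / of_int N) *s u i) + (1 / of_int N) *s u i \<in> lat X"
    and kV: "\<And>i. kap X ((1 / of_int N) *s v i) - (1 / of_int N) *s v i \<in> lat X"
    using rpl_unfold[OF X] by blast
  have H: "sesq (herm X)" using pdh_sesq[OF pdh] .
  from ai have K1: "\<And>x y. kap X (x + y) = kap X x + kap X y"
    and K2: "\<And>c x. kap X (c *s x) = cnj c *s kap X x"
    and K3: "\<And>x. kap X (kap X x) = x"
    unfolding antilinear_involution_def by blast+
  obtain Z where Z: "Z \<in> siegel" and ZU: "\<And>i. Vm v *v (Z *v axis i 1) = u i" and GZ: "GZ Z = Gm (herm X) v"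
    using construct_Z[OF pdh sb] by blast
  define \<phi> where "\<phi> = (\<lambda>M. Vm v *v M)"
  have cphi: "clin \<phi>" unfolding \<phi>_def by (rule clin_mv)
  have rphi: "rlin \<phi>" unfolding \<phi>_def by (rule rlin_mv)
  have bphi: "bij \<phi>" unfolding \<phi>_def by (rule Vm_bij[OF pdh sb])
  have iphi: "\<And>a b. \<phi> a = \<phi> b \<Longrightarrow> a = b" using bphi by (simp add: bij_def inj_def)
  have phiF: "\<And>p. \<phi> (Fp Z p) = Bx u v p"
    unfolding Fp_Bx rlin_Bx[OF rphi] by (simp add: o_def \<phi>_def ZU Vm_axis)
  have latphi: "\<phi> ` L_Z Z = lat X"
    unfolding LZ_ZZ sb_L[OF sb] image_image phiF ..
  have hermphi: "\<And>a b. herm X (\<phi> a) (\<phi> b) = H_Z Z a b"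
    unfolding \<phi>_def H_Vm[OF H sb] H_Z_GZ GZ ..
  have rk: "rlin (kap X)" by (rule alin_rlin) (use K1 K2 in blast)+
  obtain K where K: "\<And>p. kap X (Bx u v p) = Bx u v (bact K p)"
    using bx_coords[OF rk sb] kL by blast
  have KK: "sp_mult K K = bI"
  proof (rule bact_inj)
    fix p
    have "Bx u v (bact (sp_mult K K) p) = Bx u v p" by (simp add: bact_mult K[symmetric] K3)
    then show "bact (sp_mult K K) p = bact bI p" using sb_inj[OF sb] by simp
  qed
  have sK: "\<And>p q. sform (bact K p) (bact K q) = - sform p q"
  proof -
    fix p q
    have r: "\<And>p q. Im (herm X (Bx u v p) (Bx u v q)) = sform p q"
      using Q_Bx[OF H sb_rels[OF sb]] .
    show "sform (bact K p) (bact K q) = - sform p q"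
      using Qa[of "Bx u v p" "Bx u v q"] by (simp add: K r)
  qed
  have KJK: "sp_mult K (sp_mult bJ (btr K)) = bneg bJ"
    by (rule antisympl_invol[OF sform_antipres[OF sK] KK])
  obtain K11 K12 K21 K22 where Kd: "K = (K11, K12, K21, K22)" by (cases K)
  define \<gamma> where "\<gamma> = sp_mult bE (btr K)"
  have \<gamma>d: "\<gamma> = (- transpose K11, - transpose K21, transpose K12, transpose K22)"
    unfolding \<gamma>_def Kd by (rule bE_btrK)
  have btg: "btr \<gamma> = sp_mult K bE" by (simp add: \<gamma>_def btr_mult btr_bE)
  have symp: "symplectic_int \<gamma>"
  proof -
    have "sp_mult (btr \<gamma>) (sp_mult bJ \<gamma>) = sp_mult K (sp_mult (sp_mult bE (sp_mult bJ bE)) (btr K))"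
      by (simp only: btg) (simp add: \<gamma>_def sp_mult_assoc)
    also have "\<dots> = bJ" by (simp add: bEJE bneg_left bneg_right KJK)
    finally show ?thesis by (simp add: symplectic_int_iff)
  qed
  define W where "W = cmat (transpose K12) ** Z + cmat (transpose K22)"
  define T where "T = transpose W"
  have kapT: "\<And>M. kappa_Z \<gamma> Z M = T *v cnjv M" by (simp add: kappa_Z_def \<gamma>d T_def W_def)
  have Tf: "T = Z ** cmat K12 + cmat K22"
    by (simp add: T_def W_def transpose_add matrix_transpose_mul siegel_sym[OF Z] cmat_transpose)
  have kapphi: "\<phi> (kappa_Z \<gamma> Z M) = kap X (\<phi> M)" for M
  proof (rule antilin_ext[where f = "\<lambda>M. \<phi> (kappa_Z \<gamma> Z M)" and g = "\<lambda>M. kap X (\<phi> M)"])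
    show "\<And>x y. \<phi> (kappa_Z \<gamma> Z (x + y)) = \<phi> (kappa_Z \<gamma> Z x) + \<phi> (kappa_Z \<gamma> Z y)"
      by (simp add: kappa_lin clin_add[OF cphi])
    show "\<And>c x. \<phi> (kappa_Z \<gamma> Z (c *s x)) = cnj c *s \<phi> (kappa_Z \<gamma> Z x)"
      by (simp add: kappa_lin clin_smult[OF cphi])
    show "\<And>x y. kap X (\<phi> (x + y)) = kap X (\<phi> x) + kap X (\<phi> y)"
      by (simp add: K1 clin_add[OF cphi])
    show "\<And>c x. kap X (\<phi> (c *s x)) = cnj c *s kap X (\<phi> x)"
      by (simp add: K2 clin_smult[OF cphi])
    fix j
    have "kappa_Z \<gamma> Z (axis j 1) = Fp Z (bact K (0, axis j 1))"
      by (simp add: kapT cnjv_axis cnjv_rv Tf Kd bact_def Fp_def F_Z_rv mv_add_l cmat_rv axis_rv[of j]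
          flip: matrix_vector_mul_assoc)
    then show "\<phi> (kappa_Z \<gamma> Z (axis j 1)) = kap X (\<phi> (axis j 1))"
      by (simp add: phiF K[symmetric] Bx_axis2) (simp add: \<phi>_def Vm_axis)
  qed
  have kinv: "\<And>M. kappa_Z \<gamma> Z (kappa_Z \<gamma> Z M) = M"
    by (rule iphi) (simp add: kapphi K3)
  have TT: "T ** cnjM T = mat 1"
  proof (rule iffD2[OF matrix_eq], rule allI)
    fix M show "(T ** cnjM T) *v M = mat 1 *v M"
      using kinv[of M] by (simp add: kapT cnjv_mult matrix_vector_mul_assoc)
  qed
  have TT2: "cnjM T ** T = mat 1" using arg_cong[OF TT, of cnjM] by (simp add: cnjM_mult)
  have WW: "W ** cnjM W = mat 1"
    using arg_cong[OF TT2, of transpose] by (simp add: matrix_transpose_mul T_def cnjM_transpose)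
  have WW2: "cnjM W ** W = mat 1"
    using arg_cong[OF TT, of transpose] by (simp add: matrix_transpose_mul T_def cnjM_transpose)
  have minv: "matrix_inv W = cnjM W" by (rule matrix_inv_eq[OF WW WW2])
  have TZ: "T ** cnjM Z = Z ** cmat K11 + cmat K21"
  proof (rule mat_eq_cols)
    fix i
    have "\<phi> ((T ** cnjM Z) *v axis i 1) = \<phi> (kappa_Z \<gamma> Z (Z *v axis i 1))"
      by (simp add: kapT cnjv_mult cnjv_axis matrix_vector_mul_assoc)
    also have "\<dots> = kap X (u i)" by (simp add: kapphi) (simp add: \<phi>_def ZU)
    also have "\<dots> = Bx u v (bact K (axis i 1, 0))" by (simp add: K[symmetric] Bx_axis1)
    also have "\<dots> = \<phi> ((Z ** cmat K11 + cmat K21) *v axis i 1)"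
      by (simp add: phiF[symmetric] Kd bact_def Fp_def F_Z_rv mv_add_l cmat_rv axis_rv[of i]
          flip: matrix_vector_mul_assoc)
    finally show "(T ** cnjM Z) *v axis i 1 = (Z ** cmat K11 + cmat K21) *v axis i 1" by (rule iphi)
  qed
  have AB: "cmat (- transpose K11) ** Z + cmat (- transpose K21) = - (cnjM Z ** W)"
  proof -
    have "cnjM Z ** W = transpose (T ** cnjM Z)"
      by (simp add: T_def matrix_transpose_mul cnjM_siegel[OF Z])
    also have "\<dots> = cmat (transpose K11) ** Z + cmat (transpose K21)"
      by (simp add: TZ transpose_add matrix_transpose_mul siegel_sym[OF Z] cmat_transpose)
    finally show ?thesis by (simp add: cmat_neg mm_neg_l)
  qed
  have act: "sp_act \<gamma> Z = tauZ Z"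
  proof -
    have "sp_act \<gamma> Z = (cmat (- transpose K11) ** Z + cmat (- transpose K21)) ** matrix_inv W"
      by (simp add: sp_act_def \<gamma>d W_def)
    also have "\<dots> = - (cnjM Z ** (W ** cnjM W))" by (simp add: AB minv mm_neg_l matrix_mul_assoc)
    also have "\<dots> = tauZ Z" by (simp add: WW tauZ_def)
    finally show ?thesis .
  qed
  have sc: "\<And>w. kap X ((1 / of_int N) *s w) = (1 / real_of_int N) *\<^sub>R kap X w"
    by (simp add: K2 invN_scale[symmetric])
  have dU: "\<And>k i. N dvd (K11$k$i + (mat 1 :: int^'n^'n)$k$i) \<and> N dvd K21$k$i"
  proof -
    fix k i
    have "(1 / real_of_int N) *\<^sub>R (kap X (u i) + u i) \<in> lat X"
      using kU[of i] by (simp add: invN_scale rlin_scale[OF rk] scaleR_add_right)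
    moreover have "kap X (u i) + u i = Bx u v (zv (\<lambda>k. K11$k$i + (mat 1 :: int^'n^'n)$k$i), zv (\<lambda>k. K21$k$i))"
    proof -
      have "kap X (u i) + u i = Bx u v (bact K (axis i 1, 0) + (axis i 1, 0))"
        by (simp add: Bx_add K[symmetric] Bx_axis1)
      also have "bact K (axis i 1, 0) + (axis i 1, 0) = (zv (\<lambda>k. K11$k$i + (mat 1 :: int^'n^'n)$k$i), zv (\<lambda>k. K21$k$i))"
        by (simp add: Kd bact_e1) (simp add: axis_zv zv_add)
      finally show ?thesis .
    qed
    ultimately have "(1 / real_of_int N) *\<^sub>R Bx u v (zv (\<lambda>k. K11$k$i + (mat 1 :: int^'n^'n)$k$i), zv (\<lambda>k. K21$k$i)) \<in> lat X"
      by simp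
    from ZZ_div[OF sb N refl this] show "N dvd (K11$k$i + (mat 1 :: int^'n^'n)$k$i) \<and> N dvd K21$k$i" by simp
  qed
  have dV: "\<And>k i. N dvd K12$k$i \<and> N dvd (K22$k$i - (mat 1 :: int^'n^'n)$k$i)"
  proof -
    fix k i
    have "(1 / real_of_int N) *\<^sub>R (kap X (v i) - v i) \<in> lat X"
      using kV[of i] by (simp add: invN_scale rlin_scale[OF rk] scaleR_diff_right)
    moreover have "kap X (v i) - v i = Bx u v (zv (\<lambda>k. K12$k$i), zv (\<lambda>k. K22$k$i - (mat 1 :: int^'n^'n)$k$i))"
    proof -
      have "kap X (v i) - v i = Bx u v (bact K (0, axis i 1) - (0, axis i 1))"
        by (simp add: Bx_diff K[symmetric] Bx_axis2)
      also have "bact K (0, axis i 1) - (0, axis i 1) = (zv (\<lambda>k. K12$k$i), zv (\<lambda>k. K22$k$i - (mat 1 :: int^'n^'n)$k$i))"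
        by (simp add: Kd bact_e2) (simp add: axis_zv zv_diff)
      finally show ?thesis .
    qed
    ultimately have "(1 / real_of_int N) *\<^sub>R Bx u v (zv (\<lambda>k. K12$k$i), zv (\<lambda>k. K22$k$i - (mat 1 :: int^'n^'n)$k$i)) \<in> lat X"
      by simp
    from ZZ_div[OF sb N refl this] show "N dvd K12$k$i \<and> N dvd (K22$k$i - (mat 1 :: int^'n^'n)$k$i)" by simp
  qed
  have gG: "\<gamma> \<in> Gamma N"
  proof -
    have a: "\<And>i j. N dvd ((- transpose K11) $ i $ j - (mat 1 :: int^'n^'n) $ i $ j)"
    proof -
      fix i j
      have e: "(- transpose K11) $ i $ j - (mat 1 :: int^'n^'n) $ i $ j = - (K11$j$i + (mat 1 :: int^'n^'n)$j$i)"
        by (simp add: transpose_entry mat1_sym[of i j])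
      have "N dvd - (K11$j$i + (mat 1 :: int^'n^'n)$j$i)" using dU[of j i] by (simp only: dvd_minus_iff)
      then show "N dvd ((- transpose K11) $ i $ j - (mat 1 :: int^'n^'n) $ i $ j)" unfolding e .
    qed
    have d: "\<And>i j. N dvd ((transpose K22) $ i $ j - (mat 1 :: int^'n^'n) $ i $ j)"
    proof -
      fix i j
      have "(transpose K22) $ i $ j - (mat 1 :: int^'n^'n) $ i $ j = K22$j$i - (mat 1 :: int^'n^'n)$j$i"
        by (simp add: transpose_entry mat1_sym[of i j])
      then show "N dvd ((transpose K22) $ i $ j - (mat 1 :: int^'n^'n) $ i $ j)" using dV[of j i] by simp
    qed
    have b: "\<And>i j. N dvd (- transpose K21) $ i $ j" using dU by (simp add: transpose_entry)
    have c: "\<And>i j. N dvd (transpose K12) $ i $ j" using dV by (simp add: transpose_entry)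
    show ?thesis unfolding Gamma_def using symp a b c d by (simp add: \<gamma>d)
  qed
  have lvU: "\<And>i. \<phi> (lvlU (AZ N \<gamma> Z) i) - lvlU X i \<in> lat X"
  proof -
    fix i
    have "\<phi> (lvlU (AZ N \<gamma> Z) i) - lvlU X i = - (lvlU X i - (1 / of_int N) *s u i)"
      by (simp add: lvlU_AZ rlin_scale[OF rphi] phiF Bx_axis1 invN_scale)
    then show "\<phi> (lvlU (AZ N \<gamma> Z) i) - lvlU X i \<in> lat X" using sb_neg[OF sb lU[of i]] by simp
  qed
  have lvV: "\<And>i. \<phi> (lvlV (AZ N \<gamma> Z) i) - lvlV X i \<in> lat X"
  proof -
    fix i
    have "\<phi> (lvlV (AZ N \<gamma> Z) i) - lvlV X i = - (lvlV X i - (1 / of_int N) *s v i)"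
      by (simp add: lvlV_AZ rlin_scale[OF rphi] phiF Bx_axis2 invN_scale)
    then show "\<phi> (lvlV (AZ N \<gamma> Z) i) - lvlV X i \<in> lat X" using sb_neg[OF sb lV[of i]] by simp
  qed
  have iso: "rppav_iso (AZ N \<gamma> Z) X \<phi>"
  proof (rule iso_intro)
    show "clin \<phi>" by (rule cphi)
    show "bij \<phi>" by (rule bphi)
    show "\<phi> ` lat (AZ N \<gamma> Z) = lat X" using latphi by (simp add: AZ_def)
    show "\<And>a b. herm X (\<phi> a) (\<phi> b) = herm (AZ N \<gamma> Z) a b" by (simp add: hermphi AZ_def)
    show "\<And>a. \<phi> (kap (AZ N \<gamma> Z) a) = kap X (\<phi> a)" by (simp add: kapphi AZ_def)
    show "\<And>i. \<phi> (lvlU (AZ N \<gamma> Z) i) - lvlU X i \<in> lat X" by (rule lvU)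
    show "\<And>i. \<phi> (lvlV (AZ N \<gamma> Z) i) - lvlV X i \<in> lat X" by (rule lvV)
  qed
  have rpl: "real_ppav_level N (AZ N \<gamma> Z)" by (rule transport[OF iso X])
  show ?thesis using Z gG act rpl iso by blast
qed


theorem proposition7p5:
  fixes N :: int
  shows
   "(\<forall>X :: ('n::finite) rppav. N \<ge> 3 \<longrightarrow> real_ppav_level N X \<longrightarrow>
       (\<exists>Z \<gamma> \<phi>. Z \<in> siegel \<and> \<gamma> \<in> Gamma N \<and> sp_act \<gamma> Z = tauZ Z \<and>
          real_ppav_level N (AZ N \<gamma> Z) \<and> rppav_iso (AZ N \<gamma> Z) X \<phi>))
    \<and>
    (\<forall>m :: int. \<forall>(X :: 'n rppav) X' Z \<gamma> Z' \<gamma>'.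
       m \<ge> 1 \<longrightarrow> N = 4 * m \<longrightarrow>
       real_ppav_level N X \<longrightarrow> real_ppav_level N X' \<longrightarrow>
       (\<exists>\<psi>. rppav_iso X X' \<psi>) \<longrightarrow>
       Z \<in> siegel \<longrightarrow> \<gamma> \<in> Gamma N \<longrightarrow> sp_act \<gamma> Z = tauZ Z \<longrightarrow>
       (\<exists>\<phi>. rppav_iso (AZ N \<gamma> Z) X \<phi>) \<longrightarrow>
       Z' \<in> siegel \<longrightarrow> \<gamma>' \<in> Gamma N \<longrightarrow> sp_act \<gamma>' Z' = tauZ Z' \<longrightarrow>
       (\<exists>\<phi>'. rppav_iso (AZ N \<gamma>' Z') X' \<phi>') \<longrightarrow>
       cohomologous N \<gamma> \<gamma>')"
proof (intro conjI allI impI)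
  fix X :: "'n rppav"
  assume "N \<ge> 3" "real_ppav_level N X"
  then show "\<exists>Z \<gamma> \<phi>. Z \<in> siegel \<and> \<gamma> \<in> Gamma N \<and> sp_act \<gamma> Z = tauZ Z \<and>
          real_ppav_level N (AZ N \<gamma> Z) \<and> rppav_iso (AZ N \<gamma> Z) X \<phi>"
    using part1[of N X] by simp
next
  fix m :: int and X X' :: "'n rppav" and Z Z' and \<gamma> \<gamma>' :: "'n blk"
  assume m: "m \<ge> 1" "N = 4 * m" and X: "real_ppav_level N X" and X': "real_ppav_level N X'"
    and psi: "\<exists>\<psi>. rppav_iso X X' \<psi>" and Z: "Z \<in> siegel" and "\<gamma> \<in> Gamma N"
    and act: "sp_act \<gamma> Z = tauZ Z" and phi: "\<exists>\<phi>. rppav_iso (AZ N \<gamma> Z) X \<phi>"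
    and Z': "Z' \<in> siegel" and "\<gamma>' \<in> Gamma N" and act': "sp_act \<gamma>' Z' = tauZ Z'"
    and phi': "\<exists>\<phi>'. rppav_iso (AZ N \<gamma>' Z') X' \<phi>'"
  from psi obtain \<psi> where psi: "rppav_iso X X' \<psi>" by blast
  from phi obtain \<phi> where phi: "rppav_iso (AZ N \<gamma> Z) X \<phi>" by blast
  from phi' obtain \<phi>' where phi': "rppav_iso (AZ N \<gamma>' Z') X' \<phi>'" by blast
  show "cohomologous N \<gamma> \<gamma>'" by (rule part2[OF m X X' psi Z act phi Z' act' phi'])
qed

end
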